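(* Let $\gamma(s)$ be a proper triharmonic curve immersed in a 3-dimensional space form $M^3(\rho)$. Then $\gamma$ has constant curvature if and only if it has constant torsion.
   Context: $M^3(\rho)$ is a 3-dimensional Riemannian manifold of constant sectional curvature $\rho$. For an arc-length parametrized curve $\gamma$ in a Riemannian manifold $M$ with Levi-Civita connection $\nabla$, curvature tensor $R^M(X,Y)=\nabla_X\nabla_Y-\nabla_Y\nabla_X-\nabla_{[X,Y]}$ and $T=\gamma'$, $\gamma$ is triharmonic if $\nabla_T^5T+R^M(\nabla_T^3T,T)T-R^M(\nabla_T^2T,\nabla_TT)T=0$; proper triharmonic means triharmonic and not a geodesic. Curvature $\kappa$ and torsion $\tau$ are defined by the Frenet equations $\nabla_TT=\kappa N$, $\nabla_TN=-\kappa T+\tau B$, $\nabla_TB=-\tau N$. *)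

theory Defs
  imports "HOL-Analysis.Analysis"
begin

text \<open>Concrete models of the 3-dimensional space form M^3(rho), realised as a
hypersurface of R^4 (coordinates 1..4):
 rho > 0: round sphere {x. <x,x> = 1/rho} in Euclidean R^4;
 rho = 0: the hyperplane {x. x4 = 0} of Euclidean R^4 (i.e. R^3);
 rho < 0: hyperboloid {x. <x,x>_L = 1/rho, x4 > 0} in Minkowski R^{3,1}.\<close>

definition amb :: "real \<Rightarrow> real^4 \<Rightarrow> real^4 \<Rightarrow> real" where
  "amb \<rho> x y = x$1*y$1 + x$2*y$2 + x$3*y$3 + (if \<rho> < 0 then -1 else 1) * (x$4*y$4)"

definition space_form :: "real \<Rightarrow> (real^4) set" where
  "space_form \<rho> =
     (if \<rho> > 0 then {x. amb \<rho> x x = 1/\<rho>}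
      else if \<rho> = 0 then {x. x$4 = 0}
      else {x. amb \<rho> x x = 1/\<rho> \<and> x$4 > 0})"

text \<open>Levi-Civita covariant derivative along a curve gamma in space_form rho of a
vector field V along gamma: tangential projection of the ambient derivative,
which equals V' + rho <gamma', V> gamma.\<close>

definition covD :: "real \<Rightarrow> (real \<Rightarrow> real^4) \<Rightarrow> (real \<Rightarrow> real^4) \<Rightarrow> real \<Rightarrow> real^4" where
  "covD \<rho> \<gamma> V s = vector_derivative V (at s)
      + (\<rho> * amb \<rho> (vector_derivative \<gamma> (at s)) (V s)) *\<^sub>R \<gamma> s"

definition tangent :: "(real \<Rightarrow> real^4) \<Rightarrow> real \<Rightarrow> real^4" where
  "tangent \<gamma> s = vector_derivative \<gamma> (at s)"

fun covT :: "real \<Rightarrow> (real \<Rightarrow> real^4) \<Rightarrow> nat \<Rightarrow> real \<Rightarrow> real^4" where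
  "covT \<rho> \<gamma> 0 = tangent \<gamma>"
| "covT \<rho> \<gamma> (Suc k) = covD \<rho> \<gamma> (covT \<rho> \<gamma> k)"

text \<open>Curvature tensor of a space of constant sectional curvature rho, with the
convention R(X,Y) = [nabla_X, nabla_Y] - nabla_[X,Y]:
R(X,Y)Z = rho (<Y,Z> X - <X,Z> Y).\<close>
definition curvR :: "real \<Rightarrow> real^4 \<Rightarrow> real^4 \<Rightarrow> real^4 \<Rightarrow> real^4" where
  "curvR \<rho> X Y Z = \<rho> *\<^sub>R (amb \<rho> Y Z *\<^sub>R X - amb \<rho> X Z *\<^sub>R Y)"

definition triharmonic_on :: "real \<Rightarrow> real set \<Rightarrow> (real \<Rightarrow> real^4) \<Rightarrow> bool" where
  "triharmonic_on \<rho> I \<gamma> \<longleftrightarrow>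
     (\<forall>s\<in>I. covT \<rho> \<gamma> 5 s
        + curvR \<rho> (covT \<rho> \<gamma> 3 s) (covT \<rho> \<gamma> 0 s) (covT \<rho> \<gamma> 0 s)
        - curvR \<rho> (covT \<rho> \<gamma> 2 s) (covT \<rho> \<gamma> 1 s) (covT \<rho> \<gamma> 0 s) = 0)"

definition geodesic_on :: "real \<Rightarrow> real set \<Rightarrow> (real \<Rightarrow> real^4) \<Rightarrow> bool" where
  "geodesic_on \<rho> I \<gamma> \<longleftrightarrow> (\<forall>s\<in>I. covT \<rho> \<gamma> 1 s = 0)"

definition proper_triharmonic_on :: "real \<Rightarrow> real set \<Rightarrow> (real \<Rightarrow> real^4) \<Rightarrow> bool" where
  "proper_triharmonic_on \<rho> I \<gamma> \<longleftrightarrow> triharmonic_on \<rho> I \<gamma> \<and> \<not> geodesic_on \<rho> I \<gamma>"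

definition smooth_on :: "real set \<Rightarrow> (real \<Rightarrow> real^4) \<Rightarrow> bool" where
  "smooth_on I f \<longleftrightarrow> (\<exists>D::nat \<Rightarrow> real \<Rightarrow> real^4. D 0 = f \<and>
      (\<forall>k. \<forall>s\<in>I. (D k has_vector_derivative D (Suc k) s) (at s)))"

definition unit_speed_curve_in :: "real \<Rightarrow> real set \<Rightarrow> (real \<Rightarrow> real^4) \<Rightarrow> bool" where
  "unit_speed_curve_in \<rho> I \<gamma> \<longleftrightarrow> smooth_on I \<gamma> \<and>
     (\<forall>s\<in>I. \<gamma> s \<in> space_form \<rho> \<and> amb \<rho> (tangent \<gamma> s) (tangent \<gamma> s) = 1)"

text \<open>A Frenet frame (T,N,B) along gamma with curvature kappa > 0 and torsion tau:
(T,N,B) orthonormal and tangent to M^3(rho) (tangent vectors v at p satisfy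
<p,v> = 0 if rho /= 0, v4 = 0 if rho = 0), and the Frenet equations hold.\<close>
definition tangent_vec :: "real \<Rightarrow> real^4 \<Rightarrow> real^4 \<Rightarrow> bool" where
  "tangent_vec \<rho> p v \<longleftrightarrow> (if \<rho> = 0 then v$4 = 0 else amb \<rho> p v = 0)"

definition frenet_on :: "real \<Rightarrow> real set \<Rightarrow> (real \<Rightarrow> real^4) \<Rightarrow> (real \<Rightarrow> real)
    \<Rightarrow> (real \<Rightarrow> real) \<Rightarrow> (real \<Rightarrow> real^4) \<Rightarrow> (real \<Rightarrow> real^4) \<Rightarrow> bool" where
  "frenet_on \<rho> I \<gamma> \<kappa> \<tau> N B \<longleftrightarrow>
     (\<forall>s\<in>I. N differentiable (at s) \<and> B differentiable (at s) \<and> \<kappa> s > 0 \<and>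
        tangent_vec \<rho> (\<gamma> s) (N s) \<and> tangent_vec \<rho> (\<gamma> s) (B s) \<and>
        amb \<rho> (N s) (N s) = 1 \<and> amb \<rho> (B s) (B s) = 1 \<and>
        amb \<rho> (tangent \<gamma> s) (N s) = 0 \<and> amb \<rho> (tangent \<gamma> s) (B s) = 0 \<and>
        amb \<rho> (N s) (B s) = 0 \<and>
        covD \<rho> \<gamma> (tangent \<gamma>) s = \<kappa> s *\<^sub>R N s \<and>
        covD \<rho> \<gamma> N s = - \<kappa> s *\<^sub>R tangent \<gamma> s + \<tau> s *\<^sub>R B s \<and>
        covD \<rho> \<gamma> B s = - \<tau> s *\<^sub>R N s)"

end

theory Submission
  imports Defs "HOL-Computational_Algebra.Polynomial"
begin

lemma amb_add_left[simp]: "amb r (x + y) z = amb r x z + amb r y z"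
  by (simp add: amb_def algebra_simps)
lemma amb_add_right[simp]: "amb r z (x + y) = amb r z x + amb r z y"
  by (simp add: amb_def algebra_simps)
lemma amb_diff_left[simp]: "amb r (x - y) z = amb r x z - amb r y z"
  by (simp add: amb_def algebra_simps)
lemma amb_diff_right[simp]: "amb r z (x - y) = amb r z x - amb r z y"
  by (simp add: amb_def algebra_simps)
lemma amb_minus_left[simp]: "amb r (- x) z = - amb r x z"
  by (simp add: amb_def algebra_simps)
lemma amb_minus_right[simp]: "amb r z (- x) = - amb r z x"
  by (simp add: amb_def algebra_simps)
lemma amb_scale_left[simp]: "amb r (a *\<^sub>R x) z = a * amb r x z"
  by (simp add: amb_def algebra_simps)
lemma amb_scale_right[simp]: "amb r z (a *\<^sub>R x) = a * amb r z x"
  by (simp add: amb_def algebra_simps)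
lemma amb_zero_left[simp]: "amb r 0 z = 0"
  by (simp add: amb_def)
lemma amb_zero_right[simp]: "amb r z 0 = 0"
  by (simp add: amb_def)
lemma amb_sym: "amb r x y = amb r y x"
  by (simp add: amb_def algebra_simps)

lemma bb_amb: "bounded_bilinear (amb r)"
proof
  fix a b c :: "real^4" and s :: real
  show "amb r (a + b) c = amb r a c + amb r b c" "amb r a (b + c) = amb r a b + amb r a c"
     "amb r (s *\<^sub>R a) b = s *\<^sub>R amb r a b" "amb r a (s *\<^sub>R b) = s *\<^sub>R amb r a b" by simp_all
next
  show "\<exists>K. \<forall>x y. norm (amb r x y) \<le> norm x * norm y * K"
  proof (intro exI allI)
    fix x y :: "real^4"
    have c: "\<bar>x$i * y$i\<bar> \<le> norm x * norm y" for i
      by (simp add: abs_mult mult_mono component_le_norm_cart)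
    have "norm (amb r x y) \<le> \<bar>x$1*y$1\<bar> + \<bar>x$2*y$2\<bar> + \<bar>x$3*y$3\<bar> + \<bar>x$4*y$4\<bar>"
      unfolding amb_def abs_mult[symmetric] real_norm_def by (cases "r < 0"; simp; arith)
    also have "\<dots> \<le> norm x * norm y * 4" using c[of 1] c[of 2] c[of 3] c[of 4] by simp
    finally show "norm (amb r x y) \<le> norm x * norm y * 4" .
  qed
qed

fun Cn :: "nat \<Rightarrow> real set \<Rightarrow> (real \<Rightarrow> 'a::real_normed_vector) \<Rightarrow> bool" where
  "Cn 0 I f = True"
| "Cn (Suc n) I f = (\<exists>f'. (\<forall>s\<in>I. (f has_vector_derivative f' s) (at s)) \<and> Cn n I f')"

lemma CnI: "(\<forall>s\<in>I. (f has_vector_derivative f' s) (at s)) \<Longrightarrow> Cn n I f' \<Longrightarrow> Cn (Suc n) I f"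
  by auto

lemma Cn_Suc_D: "Cn (Suc n) I f \<Longrightarrow> Cn n I f"
proof (induction n arbitrary: f)
  case 0 then show ?case by simp
next
  case (Suc n)
  then obtain f' where "\<forall>s\<in>I. (f has_vector_derivative f' s) (at s)" "Cn (Suc n) I f'" by auto
  then show ?case using Suc.IH by auto
qed

lemma Cn_le: "Cn m I f \<Longrightarrow> n \<le> m \<Longrightarrow> Cn n I f"
proof (induction m)
  case 0 then show ?case by simp
next
  case (Suc m) then show ?case using Cn_Suc_D by (metis le_Suc_eq)
qed

lemma Cn_cong: assumes "open I" "\<And>s. s \<in> I \<Longrightarrow> f s = g s" "Cn n I f" shows "Cn n I g"
proof (cases n)
  case 0 then show ?thesis by simp
next
  case (Suc m)
  then obtain f' where f': "\<forall>s\<in>I. (f has_vector_derivative f' s) (at s)" "Cn m I f'" using assms by auto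
  have "\<forall>s\<in>I. (g has_vector_derivative f' s) (at s)"
    using f'(1) has_vector_derivative_transform_within_open[OF _ assms(1)] assms(2) by blast
  then show ?thesis using Suc f'(2) by auto
qed

lemma Cn_has: "Cn (Suc n) I f \<Longrightarrow> s \<in> I \<Longrightarrow> (f has_vector_derivative vector_derivative f (at s)) (at s)"
  by (auto simp: vector_derivative_at)

lemma Cn_const: "Cn n I (\<lambda>_. c)"
proof (induction n arbitrary: c)
  case 0 then show ?case by simp
next
  case (Suc n)
  have "\<forall>s\<in>I. ((\<lambda>_. c) has_vector_derivative (\<lambda>_. 0) s) (at s)" by (auto intro: derivative_eq_intros)
  then show ?case using Suc.IH by (rule CnI)
qed

lemma Cn_add: "Cn n I f \<Longrightarrow> Cn n I g \<Longrightarrow> Cn n I (\<lambda>s. f s + g s)"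
proof (induction n arbitrary: f g)
  case 0 then show ?case by simp
next
  case (Suc n)
  obtain f' where f': "\<forall>s\<in>I. (f has_vector_derivative f' s) (at s)" "Cn n I f'" using Suc.prems by auto
  obtain g' where g': "\<forall>s\<in>I. (g has_vector_derivative g' s) (at s)" "Cn n I g'" using Suc.prems by auto
  have "\<forall>s\<in>I. ((\<lambda>s. f s + g s) has_vector_derivative (\<lambda>s. f' s + g' s) s) (at s)"
    using f' g' by (auto intro: derivative_eq_intros)
  then show ?case using Suc.IH[OF f'(2) g'(2)] by (rule CnI)
qed

lemma Cn_bil: assumes "bounded_bilinear bl" shows "Cn n I f \<Longrightarrow> Cn n I g \<Longrightarrow> Cn n I (\<lambda>s. bl (f s) (g s))"
proof (induction n arbitrary: f g)
  case 0 then show ?case by simp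
next
  case (Suc n)
  obtain f' where f': "\<forall>s\<in>I. (f has_vector_derivative f' s) (at s)" "Cn n I f'" using Suc.prems by auto
  obtain g' where g': "\<forall>s\<in>I. (g has_vector_derivative g' s) (at s)" "Cn n I g'" using Suc.prems by auto
  have "\<forall>s\<in>I. ((\<lambda>s. bl (f s) (g s)) has_vector_derivative (\<lambda>s. bl (f s) (g' s) + bl (f' s) (g s)) s) (at s)"
  proof
    fix s assume "s \<in> I"
    then show "((\<lambda>s. bl (f s) (g s)) has_vector_derivative (\<lambda>s. bl (f s) (g' s) + bl (f' s) (g s)) s) (at s)"
      using f'(1) g'(1) bounded_bilinear.has_vector_derivative[OF assms] by blast
  qed
  moreover have "Cn n I (\<lambda>s. bl (f s) (g' s) + bl (f' s) (g s))"
    using Suc.IH[OF Cn_Suc_D[OF Suc.prems(1)] g'(2)] Suc.IH[OF f'(2) Cn_Suc_D[OF Suc.prems(2)]]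
    by (intro Cn_add) 
  ultimately show ?case by (rule CnI)
qed

lemmas Cn_mult = Cn_bil[OF bounded_bilinear_mult]
lemmas Cn_scaleR = Cn_bil[OF bounded_bilinear_scaleR]
lemmas Cn_amb = Cn_bil[OF bb_amb]

lemma Cn_minus: "Cn n I f \<Longrightarrow> Cn n I (\<lambda>s. - f s)"
  using Cn_scaleR[OF Cn_const[of n I "-1"], of f] by simp

lemma Cn_diff: "Cn n I f \<Longrightarrow> Cn n I g \<Longrightarrow> Cn n I (\<lambda>s. f s - g s)"
  using Cn_add[OF _ Cn_minus[of n I g]] by simp

lemma deriv_inv: "(f has_real_derivative d) (at s) \<Longrightarrow> f s \<noteq> 0 \<Longrightarrow> ((\<lambda>s. inverse (f s)) has_real_derivative - (d * (inverse (f s) * inverse (f s)))) (at s)"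
  using DERIV_inverse_fun[of f d s UNIV] by (simp add: power2_eq_square)
lemma deriv_sqrt: "(f has_real_derivative d) (at s) \<Longrightarrow> f s > 0 \<Longrightarrow> ((\<lambda>s. sqrt (f s)) has_real_derivative (d * inverse (2 * sqrt (f s)))) (at s)"
  using DERIV_chain2[OF DERIV_real_sqrt, of f s d] by (simp add: field_simps)

lemma Cn_inverse: "Cn n I (f::real\<Rightarrow>real) \<Longrightarrow> (\<forall>s\<in>I. f s \<noteq> 0) \<Longrightarrow> Cn n I (\<lambda>s. inverse (f s))"
proof (induction n arbitrary: f)
  case 0 then show ?case by simp
next
  case (Suc n)
  obtain f' where f': "\<forall>s\<in>I. (f has_vector_derivative f' s) (at s)" "Cn n I f'" using Suc.prems by auto
  have "\<forall>s\<in>I. ((\<lambda>s. inverse (f s)) has_vector_derivative (\<lambda>s. - (f' s * (inverse (f s) * inverse (f s)))) s) (at s)"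
    using f' Suc.prems(2) deriv_inv unfolding has_real_derivative_iff_has_vector_derivative[symmetric]
    by blast
  moreover have "Cn n I (\<lambda>s. - (f' s * (inverse (f s) * inverse (f s))))"
    using Suc.IH[OF Cn_Suc_D[OF Suc.prems(1)] Suc.prems(2)] f'(2)
    by (intro Cn_minus Cn_mult) 
  ultimately show ?case by (rule CnI)
qed

lemma Cn_sqrt: "Cn n I (f::real\<Rightarrow>real) \<Longrightarrow> (\<forall>s\<in>I. f s > 0) \<Longrightarrow> Cn n I (\<lambda>s. sqrt (f s))"
proof (induction n arbitrary: f)
  case 0 then show ?case by simp
next
  case (Suc n)
  obtain f' where f': "\<forall>s\<in>I. (f has_vector_derivative f' s) (at s)" "Cn n I f'" using Suc.prems by auto
  have "\<forall>s\<in>I. ((\<lambda>s. sqrt (f s)) has_vector_derivative (\<lambda>s. f' s * inverse (2 * sqrt (f s))) s) (at s)"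
    using f' Suc.prems(2) deriv_sqrt unfolding has_real_derivative_iff_has_vector_derivative[symmetric]
    by blast
  moreover have "Cn n I (\<lambda>s. f' s * inverse (2 * sqrt (f s)))"
    using Suc.IH[OF Cn_Suc_D[OF Suc.prems(1)] Suc.prems(2)] f'(2) Suc.prems(2)
    by (intro Cn_mult Cn_inverse Cn_const) auto
  ultimately show ?case by (rule CnI)
qed

lemma smooth_Cn: assumes "smooth_on I f" shows "Cn n I f"
proof -
  obtain D where D: "D 0 = f" "\<forall>k. \<forall>s\<in>I. (D k has_vector_derivative D (Suc k) s) (at s)"
    using assms unfolding smooth_on_def by blast
  have "\<forall>k. Cn n I (D k)"
  proof (induction n)
    case 0 then show ?case by simp
  next
    case (Suc n)
    show ?case
    proof
      fix k
      have "\<forall>s\<in>I. (D k has_vector_derivative D (Suc k) s) (at s)" using D(2) by blast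
      then show "Cn (Suc n) I (D k)" using Suc.IH by (metis Cn.simps(2))
    qed
  qed
  then show ?thesis using D(1) by metis
qed

lemma CnE: "Cn (Suc n) I f \<Longrightarrow> \<exists>f'. (\<forall>s\<in>I. (f has_vector_derivative f' s) (at s)) \<and> Cn n I f'"
  by simp

declare Cn.simps(2)[simp del]

locale tri =
  fixes \<rho> :: real and I :: "real set" and \<gamma> :: "real \<Rightarrow> real^4"
    and \<kappa> \<tau> :: "real \<Rightarrow> real" and N B :: "real \<Rightarrow> real^4"
  assumes I_open: "open I" and I_int: "is_interval I"
    and uc: "unit_speed_curve_in \<rho> I \<gamma>"
    and fr: "frenet_on \<rho> I \<gamma> \<kappa> \<tau> N B"
begin

abbreviation "T \<equiv> tangent \<gamma>"

lemma g_Cn: "Cn n I \<gamma>"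
  using uc smooth_Cn unfolding unit_speed_curve_in_def by blast

lemma g_der: "s \<in> I \<Longrightarrow> (\<gamma> has_vector_derivative T s) (at s)"
  using Cn_has[OF g_Cn[of "Suc 0"]] unfolding tangent_def by blast

lemma T_Cn: "Cn n I T"
proof -
  obtain g' where g': "\<forall>s\<in>I. (\<gamma> has_vector_derivative g' s) (at s)" "Cn n I g'"
    using CnE[OF g_Cn[of "Suc n"]] by blast
  show ?thesis
    by (rule Cn_cong[OF I_open _ g'(2)]) (use g'(1) in \<open>auto simp: tangent_def vector_derivative_at\<close>)
qed

lemma covD_Cn: assumes "Cn (Suc n) I V" shows "Cn n I (covD \<rho> \<gamma> V)"
proof -
  obtain V' where V': "\<forall>s\<in>I. (V has_vector_derivative V' s) (at s)" "Cn n I V'"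
    using CnE[OF assms] by blast
  have C: "Cn n I (\<lambda>s. V' s + (\<rho> * amb \<rho> (T s) (V s)) *\<^sub>R \<gamma> s)"
    by (intro Cn_add Cn_scaleR Cn_mult Cn_const Cn_amb T_Cn g_Cn V'(2) Cn_Suc_D[OF assms])
  show ?thesis
    by (rule Cn_cong[OF I_open _ C]) (use V'(1) in \<open>auto simp: covD_def vector_derivative_at tangent_def\<close>)
qed

lemma covT_Cn: "Cn n I (covT \<rho> \<gamma> k)"
proof (induction k arbitrary: n)
  case 0 then show ?case using T_Cn by simp
next
  case (Suc k)
  have "Cn n I (covD \<rho> \<gamma> (covT \<rho> \<gamma> k))" by (rule covD_Cn[OF Suc.IH])
  then show ?case by (simp only: covT.simps)
qed

lemma covT_has: "s \<in> I \<Longrightarrow> (covT \<rho> \<gamma> k has_vector_derivative vector_derivative (covT \<rho> \<gamma> k) (at s)) (at s)"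
  using Cn_has[OF covT_Cn[of "Suc 0"]] by blast

lemma T_has: "s \<in> I \<Longrightarrow> (T has_vector_derivative vector_derivative T (at s)) (at s)"
  using covT_has[of s 0] by simp

lemma covD_alt: "covD \<rho> \<gamma> V s = vector_derivative V (at s) + (\<rho> * amb \<rho> (T s) (V s)) *\<^sub>R \<gamma> s"
  by (simp add: covD_def tangent_def)

lemma frs: assumes "s \<in> I" shows
  "N differentiable (at s)" "B differentiable (at s)" "\<kappa> s > 0"
  "amb \<rho> (N s) (N s) = 1" "amb \<rho> (B s) (B s) = 1" "amb \<rho> (T s) (T s) = 1"
  "amb \<rho> (T s) (N s) = 0" "amb \<rho> (T s) (B s) = 0" "amb \<rho> (N s) (B s) = 0"
  "amb \<rho> (N s) (T s) = 0" "amb \<rho> (B s) (T s) = 0" "amb \<rho> (B s) (N s) = 0"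
  "covD \<rho> \<gamma> T s = \<kappa> s *\<^sub>R N s"
  "covD \<rho> \<gamma> N s = - \<kappa> s *\<^sub>R T s + \<tau> s *\<^sub>R B s"
  "covD \<rho> \<gamma> B s = - \<tau> s *\<^sub>R N s"
  using fr uc assms unfolding frenet_on_def unit_speed_curve_in_def by (auto simp: amb_sym)

lemma T_der: assumes "s \<in> I" shows "(T has_vector_derivative (\<kappa> s *\<^sub>R N s - \<rho> *\<^sub>R \<gamma> s)) (at s)"
proof -
  have "vector_derivative T (at s) = \<kappa> s *\<^sub>R N s - \<rho> *\<^sub>R \<gamma> s"
    using frs[OF assms] unfolding covD_alt by (simp add: algebra_simps)
  then show ?thesis using T_has[OF assms] by simp
qed

lemma N_der: assumes "s \<in> I" shows "(N has_vector_derivative (- \<kappa> s *\<^sub>R T s + \<tau> s *\<^sub>R B s)) (at s)"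
proof -
  have "vector_derivative N (at s) = - \<kappa> s *\<^sub>R T s + \<tau> s *\<^sub>R B s"
    using frs[OF assms] unfolding covD_alt by (simp add: algebra_simps)
  then show ?thesis using frs(1)[OF assms] vector_derivative_works by metis
qed

lemma B_der: assumes "s \<in> I" shows "(B has_vector_derivative (- \<tau> s *\<^sub>R N s)) (at s)"
proof -
  have "vector_derivative B (at s) = - \<tau> s *\<^sub>R N s"
    using frs[OF assms] unfolding covD_alt by (simp add: algebra_simps)
  then show ?thesis using frs(2)[OF assms] vector_derivative_works by metis
qed

lemma covD_at: "(V has_vector_derivative V') (at s) \<Longrightarrow> covD \<rho> \<gamma> V s = V' + (\<rho> * amb \<rho> (T s) (V s)) *\<^sub>R \<gamma> s"
  unfolding covD_def tangent_def by (simp add: vector_derivative_at)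

lemma frame:
  assumes s: "s \<in> I" and V: "\<And>x. x \<in> I \<Longrightarrow> V x = a x *\<^sub>R T x + b x *\<^sub>R N x + e x *\<^sub>R B x"
    and da: "(a has_real_derivative a1) (at s)" and db: "(b has_real_derivative b1) (at s)"
    and de: "(e has_real_derivative e1) (at s)"
  shows "covD \<rho> \<gamma> V s = (a1 - \<kappa> s * b s) *\<^sub>R T s + (b1 + \<kappa> s * a s - \<tau> s * e s) *\<^sub>R N s + (e1 + \<tau> s * b s) *\<^sub>R B s"
proof -
  have "((\<lambda>x. a x *\<^sub>R T x + b x *\<^sub>R N x + e x *\<^sub>R B x) has_vector_derivative
     (a s *\<^sub>R (\<kappa> s *\<^sub>R N s - \<rho> *\<^sub>R \<gamma> s) + a1 *\<^sub>R T s) + (b s *\<^sub>R (- \<kappa> s *\<^sub>R T s + \<tau> s *\<^sub>R B s) + b1 *\<^sub>R N s)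
       + (e s *\<^sub>R (- \<tau> s *\<^sub>R N s) + e1 *\<^sub>R B s)) (at s)"
    by (intro has_vector_derivative_add has_vector_derivative_scaleR da db de T_der N_der B_der s)
  then have "(V has_vector_derivative
     (a s *\<^sub>R (\<kappa> s *\<^sub>R N s - \<rho> *\<^sub>R \<gamma> s) + a1 *\<^sub>R T s) + (b s *\<^sub>R (- \<kappa> s *\<^sub>R T s + \<tau> s *\<^sub>R B s) + b1 *\<^sub>R N s)
       + (e s *\<^sub>R (- \<tau> s *\<^sub>R N s) + e1 *\<^sub>R B s)) (at s)"
    by (rule has_vector_derivative_transform_within_open[OF _ I_open s]) (simp add: V)
  then have "covD \<rho> \<gamma> V s = (a s *\<^sub>R (\<kappa> s *\<^sub>R N s - \<rho> *\<^sub>R \<gamma> s) + a1 *\<^sub>R T s) + (b s *\<^sub>R (- \<kappa> s *\<^sub>R T s + \<tau> s *\<^sub>R B s) + b1 *\<^sub>R N s)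
       + (e s *\<^sub>R (- \<tau> s *\<^sub>R N s) + e1 *\<^sub>R B s) + (\<rho> * a s) *\<^sub>R \<gamma> s"
    using covD_at V[OF s] frs[OF s] by simp
  then show ?thesis by (simp add: algebra_simps)
qed

end

context tri
begin

lemma step:
  assumes tc: "\<forall>x\<in>I. \<tau> x = c"
   and V: "\<forall>x\<in>I. covT \<rho> \<gamma> k x = a x *\<^sub>R T x + b x *\<^sub>R N x + e x *\<^sub>R B x"
   and da: "\<forall>x\<in>I. (a has_real_derivative a1 x) (at x)"
   and db: "\<forall>x\<in>I. (b has_real_derivative b1 x) (at x)"
   and de: "\<forall>x\<in>I. (e has_real_derivative e1 x) (at x)"
   and ea: "\<And>x. x \<in> I \<Longrightarrow> a2 x = a1 x - \<kappa> x * b x"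
   and eb: "\<And>x. x \<in> I \<Longrightarrow> b2 x = b1 x + \<kappa> x * a x - c * e x"
   and ee: "\<And>x. x \<in> I \<Longrightarrow> e2 x = e1 x + c * b x"
  shows "\<forall>x\<in>I. covT \<rho> \<gamma> (Suc k) x = a2 x *\<^sub>R T x + b2 x *\<^sub>R N x + e2 x *\<^sub>R B x"
proof
  fix x assume x: "x \<in> I"
  have "covT \<rho> \<gamma> (Suc k) x = covD \<rho> \<gamma> (covT \<rho> \<gamma> k) x" by simp
  also have "\<dots> = (a1 x - \<kappa> x * b x) *\<^sub>R T x + (b1 x + \<kappa> x * a x - \<tau> x * e x) *\<^sub>R N x + (e1 x + \<tau> x * b x) *\<^sub>R B x"
    by (rule frame[OF x]) (use V da db de x in auto)
  finally show "covT \<rho> \<gamma> (Suc k) x = a2 x *\<^sub>R T x + b2 x *\<^sub>R N x + e2 x *\<^sub>R B x"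
    using ea[OF x] eb[OF x] ee[OF x] tc x by simp
qed

end

locale tri2 = tri +
  fixes c :: real and k1 k2 k3 k4 :: "real \<Rightarrow> real"
  assumes tc: "\<forall>x\<in>I. \<tau> x = c"
   and d1: "\<forall>x\<in>I. (\<kappa> has_real_derivative k1 x) (at x)"
   and d2: "\<forall>x\<in>I. (k1 has_real_derivative k2 x) (at x)"
   and d3: "\<forall>x\<in>I. (k2 has_real_derivative k3 x) (at x)"
   and d4: "\<forall>x\<in>I. (k3 has_real_derivative k4 x) (at x)"
begin

lemma L0: "\<forall>x\<in>I. covT \<rho> \<gamma> 0 x = (1::real) *\<^sub>R T x + (0::real) *\<^sub>R N x + (0::real) *\<^sub>R B x"
  by simp

lemma dA0: "\<forall>x\<in>I. ((\<lambda>x. (1)) has_real_derivative 0) (at x)"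
proof
  fix x assume x: "x \<in> I"
  show "((\<lambda>x. (1)) has_real_derivative 0) (at x)"
    apply (rule DERIV_cong)
     apply (rule derivative_intros d1[rule_format, OF x] d2[rule_format, OF x] d3[rule_format, OF x] d4[rule_format, OF x])+
    apply (simp add: algebra_simps)
    done
qed

lemma dBc0: "\<forall>x\<in>I. ((\<lambda>x. 0) has_real_derivative 0) (at x)"
proof
  fix x assume x: "x \<in> I"
  show "((\<lambda>x. 0) has_real_derivative 0) (at x)"
    apply (rule DERIV_cong)
     apply (rule derivative_intros d1[rule_format, OF x] d2[rule_format, OF x] d3[rule_format, OF x] d4[rule_format, OF x])+
    apply (simp add: algebra_simps)
    done
qed

lemma dE0: "\<forall>x\<in>I. ((\<lambda>x. 0) has_real_derivative 0) (at x)"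
proof
  fix x assume x: "x \<in> I"
  show "((\<lambda>x. 0) has_real_derivative 0) (at x)"
    apply (rule DERIV_cong)
     apply (rule derivative_intros d1[rule_format, OF x] d2[rule_format, OF x] d3[rule_format, OF x] d4[rule_format, OF x])+
    apply (simp add: algebra_simps)
    done
qed

lemma L1: "\<forall>x\<in>I. covT \<rho> \<gamma> (Suc 0) x = 0 *\<^sub>R T x + (\<kappa> x) *\<^sub>R N x + 0 *\<^sub>R B x"
  by (rule step[OF tc L0 dA0 dBc0 dE0]) (simp_all add: algebra_simps)

lemma dA1: "\<forall>x\<in>I. ((\<lambda>x. 0) has_real_derivative 0) (at x)"
proof
  fix x assume x: "x \<in> I"
  show "((\<lambda>x. 0) has_real_derivative 0) (at x)"
    apply (rule DERIV_cong)
     apply (rule derivative_intros d1[rule_format, OF x] d2[rule_format, OF x] d3[rule_format, OF x] d4[rule_format, OF x])+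
    apply (simp add: algebra_simps)
    done
qed

lemma dBc1: "\<forall>x\<in>I. ((\<lambda>x. (\<kappa> x)) has_real_derivative (k1 x)) (at x)"
proof
  fix x assume x: "x \<in> I"
  show "((\<lambda>x. (\<kappa> x)) has_real_derivative (k1 x)) (at x)"
    apply (rule DERIV_cong)
     apply (rule derivative_intros d1[rule_format, OF x] d2[rule_format, OF x] d3[rule_format, OF x] d4[rule_format, OF x])+
    apply (simp add: algebra_simps)
    done
qed

lemma dE1: "\<forall>x\<in>I. ((\<lambda>x. 0) has_real_derivative 0) (at x)"
proof
  fix x assume x: "x \<in> I"
  show "((\<lambda>x. 0) has_real_derivative 0) (at x)"
    apply (rule DERIV_cong)
     apply (rule derivative_intros d1[rule_format, OF x] d2[rule_format, OF x] d3[rule_format, OF x] d4[rule_format, OF x])+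
    apply (simp add: algebra_simps)
    done
qed

lemma L2: "\<forall>x\<in>I. covT \<rho> \<gamma> (Suc (Suc 0)) x = (- \<kappa> x * \<kappa> x) *\<^sub>R T x + (k1 x) *\<^sub>R N x + (\<kappa> x * c) *\<^sub>R B x"
  by (rule step[OF tc L1 dA1 dBc1 dE1]) (simp_all add: algebra_simps)

lemma dA2: "\<forall>x\<in>I. ((\<lambda>x. (- \<kappa> x * \<kappa> x)) has_real_derivative (- 2 * \<kappa> x * k1 x)) (at x)"
proof
  fix x assume x: "x \<in> I"
  show "((\<lambda>x. (- \<kappa> x * \<kappa> x)) has_real_derivative (- 2 * \<kappa> x * k1 x)) (at x)"
    apply (rule DERIV_cong)
     apply (rule derivative_intros d1[rule_format, OF x] d2[rule_format, OF x] d3[rule_format, OF x] d4[rule_format, OF x])+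
    apply (simp add: algebra_simps)
    done
qed

lemma dBc2: "\<forall>x\<in>I. ((\<lambda>x. (k1 x)) has_real_derivative (k2 x)) (at x)"
proof
  fix x assume x: "x \<in> I"
  show "((\<lambda>x. (k1 x)) has_real_derivative (k2 x)) (at x)"
    apply (rule DERIV_cong)
     apply (rule derivative_intros d1[rule_format, OF x] d2[rule_format, OF x] d3[rule_format, OF x] d4[rule_format, OF x])+
    apply (simp add: algebra_simps)
    done
qed

lemma dE2: "\<forall>x\<in>I. ((\<lambda>x. (\<kappa> x * c)) has_real_derivative (k1 x * c)) (at x)"
proof
  fix x assume x: "x \<in> I"
  show "((\<lambda>x. (\<kappa> x * c)) has_real_derivative (k1 x * c)) (at x)"
    apply (rule DERIV_cong)
     apply (rule derivative_intros d1[rule_format, OF x] d2[rule_format, OF x] d3[rule_format, OF x] d4[rule_format, OF x])+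
    apply (simp add: algebra_simps)
    done
qed

lemma L3: "\<forall>x\<in>I. covT \<rho> \<gamma> (Suc (Suc (Suc 0))) x = (- 3 * \<kappa> x * k1 x) *\<^sub>R T x + (k2 x - \<kappa> x * c * c - \<kappa> x * \<kappa> x * \<kappa> x) *\<^sub>R N x + (2 * k1 x * c) *\<^sub>R B x"
  by (rule step[OF tc L2 dA2 dBc2 dE2]) (simp_all add: algebra_simps)

lemma dA3: "\<forall>x\<in>I. ((\<lambda>x. (- 3 * \<kappa> x * k1 x)) has_real_derivative (- 3 * k1 x * k1 x - 3 * \<kappa> x * k2 x)) (at x)"
proof
  fix x assume x: "x \<in> I"
  show "((\<lambda>x. (- 3 * \<kappa> x * k1 x)) has_real_derivative (- 3 * k1 x * k1 x - 3 * \<kappa> x * k2 x)) (at x)"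
    apply (rule DERIV_cong)
     apply (rule derivative_intros d1[rule_format, OF x] d2[rule_format, OF x] d3[rule_format, OF x] d4[rule_format, OF x])+
    apply (simp add: algebra_simps)
    done
qed

lemma dBc3: "\<forall>x\<in>I. ((\<lambda>x. (k2 x - \<kappa> x * c * c - \<kappa> x * \<kappa> x * \<kappa> x)) has_real_derivative (k3 x - k1 x * c * c - 3 * \<kappa> x * \<kappa> x * k1 x)) (at x)"
proof
  fix x assume x: "x \<in> I"
  show "((\<lambda>x. (k2 x - \<kappa> x * c * c - \<kappa> x * \<kappa> x * \<kappa> x)) has_real_derivative (k3 x - k1 x * c * c - 3 * \<kappa> x * \<kappa> x * k1 x)) (at x)"
    apply (rule DERIV_cong)
     apply (rule derivative_intros d1[rule_format, OF x] d2[rule_format, OF x] d3[rule_format, OF x] d4[rule_format, OF x])+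
    apply (simp add: algebra_simps)
    done
qed

lemma dE3: "\<forall>x\<in>I. ((\<lambda>x. (2 * k1 x * c)) has_real_derivative (2 * k2 x * c)) (at x)"
proof
  fix x assume x: "x \<in> I"
  show "((\<lambda>x. (2 * k1 x * c)) has_real_derivative (2 * k2 x * c)) (at x)"
    apply (rule DERIV_cong)
     apply (rule derivative_intros d1[rule_format, OF x] d2[rule_format, OF x] d3[rule_format, OF x] d4[rule_format, OF x])+
    apply (simp add: algebra_simps)
    done
qed

lemma L4: "\<forall>x\<in>I. covT \<rho> \<gamma> (Suc (Suc (Suc (Suc 0)))) x = (- 3 * k1 x * k1 x - 4 * \<kappa> x * k2 x + \<kappa> x * \<kappa> x * c * c + \<kappa> x * \<kappa> x * \<kappa> x * \<kappa> x) *\<^sub>R T x + (k3 x - 3 * k1 x * c * c - 6 * \<kappa> x * \<kappa> x * k1 x) *\<^sub>R N x + (3 * k2 x * c - \<kappa> x * c * c * c - \<kappa> x * \<kappa> x * \<kappa> x * c) *\<^sub>R B x"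
  by (rule step[OF tc L3 dA3 dBc3 dE3]) (simp_all add: algebra_simps)

lemma dA4: "\<forall>x\<in>I. ((\<lambda>x. (- 3 * k1 x * k1 x - 4 * \<kappa> x * k2 x + \<kappa> x * \<kappa> x * c * c + \<kappa> x * \<kappa> x * \<kappa> x * \<kappa> x)) has_real_derivative (- 10 * k1 x * k2 x - 4 * \<kappa> x * k3 x + 2 * \<kappa> x * k1 x * c * c + 4 * \<kappa> x * \<kappa> x * \<kappa> x * k1 x)) (at x)"
proof
  fix x assume x: "x \<in> I"
  show "((\<lambda>x. (- 3 * k1 x * k1 x - 4 * \<kappa> x * k2 x + \<kappa> x * \<kappa> x * c * c + \<kappa> x * \<kappa> x * \<kappa> x * \<kappa> x)) has_real_derivative (- 10 * k1 x * k2 x - 4 * \<kappa> x * k3 x + 2 * \<kappa> x * k1 x * c * c + 4 * \<kappa> x * \<kappa> x * \<kappa> x * k1 x)) (at x)"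
    apply (rule DERIV_cong)
     apply (rule derivative_intros d1[rule_format, OF x] d2[rule_format, OF x] d3[rule_format, OF x] d4[rule_format, OF x])+
    apply (simp add: algebra_simps)
    done
qed

lemma dBc4: "\<forall>x\<in>I. ((\<lambda>x. (k3 x - 3 * k1 x * c * c - 6 * \<kappa> x * \<kappa> x * k1 x)) has_real_derivative (k4 x - 3 * k2 x * c * c - 12 * \<kappa> x * k1 x * k1 x - 6 * \<kappa> x * \<kappa> x * k2 x)) (at x)"
proof
  fix x assume x: "x \<in> I"
  show "((\<lambda>x. (k3 x - 3 * k1 x * c * c - 6 * \<kappa> x * \<kappa> x * k1 x)) has_real_derivative (k4 x - 3 * k2 x * c * c - 12 * \<kappa> x * k1 x * k1 x - 6 * \<kappa> x * \<kappa> x * k2 x)) (at x)"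
    apply (rule DERIV_cong)
     apply (rule derivative_intros d1[rule_format, OF x] d2[rule_format, OF x] d3[rule_format, OF x] d4[rule_format, OF x])+
    apply (simp add: algebra_simps)
    done
qed

lemma dE4: "\<forall>x\<in>I. ((\<lambda>x. (3 * k2 x * c - \<kappa> x * c * c * c - \<kappa> x * \<kappa> x * \<kappa> x * c)) has_real_derivative (3 * k3 x * c - k1 x * c * c * c - 3 * \<kappa> x * \<kappa> x * k1 x * c)) (at x)"
proof
  fix x assume x: "x \<in> I"
  show "((\<lambda>x. (3 * k2 x * c - \<kappa> x * c * c * c - \<kappa> x * \<kappa> x * \<kappa> x * c)) has_real_derivative (3 * k3 x * c - k1 x * c * c * c - 3 * \<kappa> x * \<kappa> x * k1 x * c)) (at x)"
    apply (rule DERIV_cong)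
     apply (rule derivative_intros d1[rule_format, OF x] d2[rule_format, OF x] d3[rule_format, OF x] d4[rule_format, OF x])+
    apply (simp add: algebra_simps)
    done
qed

lemma L5: "\<forall>x\<in>I. covT \<rho> \<gamma> (Suc (Suc (Suc (Suc (Suc 0))))) x = (- 10 * k1 x * k2 x - 5 * \<kappa> x * k3 x + 5 * \<kappa> x * k1 x * c * c + 10 * \<kappa> x * \<kappa> x * \<kappa> x * k1 x) *\<^sub>R T x + (k4 x - 6 * k2 x * c * c + \<kappa> x * c * c * c * c - 15 * \<kappa> x * k1 x * k1 x - 10 * \<kappa> x * \<kappa> x * k2 x + 2 * \<kappa> x * \<kappa> x * \<kappa> x * c * c + \<kappa> x * \<kappa> x * \<kappa> x * \<kappa> x * \<kappa> x) *\<^sub>R N x + (4 * k3 x * c - 4 * k1 x * c * c * c - 9 * \<kappa> x * \<kappa> x * k1 x * c) *\<^sub>R B x"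
  by (rule step[OF tc L4 dA4 dBc4 dE4]) (simp_all add: algebra_simps)

end

context tri2
begin

lemma eqs:
  assumes th: "triharmonic_on \<rho> I \<gamma>" and s: "s \<in> I"
  shows "(- 10 * k1 s * k2 s - 5 * \<kappa> s * k3 s + 5 * \<kappa> s * k1 s * c * c + 10 * \<kappa> s * \<kappa> s * \<kappa> s * k1 s) = 0" "(k4 s - 6 * k2 s * c * c + \<kappa> s * c * c * c * c - 15 * \<kappa> s * k1 s * k1 s - 10 * \<kappa> s * \<kappa> s * k2 s + 2 * \<kappa> s * \<kappa> s * \<kappa> s * c * c + \<kappa> s * \<kappa> s * \<kappa> s * \<kappa> s * \<kappa> s) + \<rho> * (k2 s - \<kappa> s * c * c - \<kappa> s * \<kappa> s * \<kappa> s) - \<rho> * (\<kappa> s * \<kappa> s * \<kappa> s) = 0" "(4 * k3 s * c - 4 * k1 s * c * c * c - 9 * \<kappa> s * \<kappa> s * k1 s * c) + \<rho> * (2 * k1 s * c) = 0"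
proof -
  have E: "covT \<rho> \<gamma> (Suc (Suc (Suc (Suc (Suc 0))))) s
        + curvR \<rho> (covT \<rho> \<gamma> (Suc (Suc (Suc 0))) s) (covT \<rho> \<gamma> 0 s) (covT \<rho> \<gamma> 0 s)
        - curvR \<rho> (covT \<rho> \<gamma> (Suc (Suc 0)) s) (covT \<rho> \<gamma> (Suc 0) s) (covT \<rho> \<gamma> 0 s) = 0"
    using th s unfolding triharmonic_on_def by (simp add: eval_nat_numeral)
  note Ls = L0[rule_format, OF s] L1[rule_format, OF s] L2[rule_format, OF s] L3[rule_format, OF s] L5[rule_format, OF s]
  have r1: "amb \<rho> (covT \<rho> \<gamma> (Suc (Suc (Suc (Suc (Suc 0))))) s
        + curvR \<rho> (covT \<rho> \<gamma> (Suc (Suc (Suc 0))) s) (covT \<rho> \<gamma> 0 s) (covT \<rho> \<gamma> 0 s)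
        - curvR \<rho> (covT \<rho> \<gamma> (Suc (Suc 0)) s) (covT \<rho> \<gamma> (Suc 0) s) (covT \<rho> \<gamma> 0 s)) (T s) = (- 10 * k1 s * k2 s - 5 * \<kappa> s * k3 s + 5 * \<kappa> s * k1 s * c * c + 10 * \<kappa> s * \<kappa> s * \<kappa> s * k1 s)"
    unfolding Ls curvR_def by (simp add: frs[OF s]; simp add: algebra_simps)
  have r2: "amb \<rho> (covT \<rho> \<gamma> (Suc (Suc (Suc (Suc (Suc 0))))) s
        + curvR \<rho> (covT \<rho> \<gamma> (Suc (Suc (Suc 0))) s) (covT \<rho> \<gamma> 0 s) (covT \<rho> \<gamma> 0 s)
        - curvR \<rho> (covT \<rho> \<gamma> (Suc (Suc 0)) s) (covT \<rho> \<gamma> (Suc 0) s) (covT \<rho> \<gamma> 0 s)) (N s) = (k4 s - 6 * k2 s * c * c + \<kappa> s * c * c * c * c - 15 * \<kappa> s * k1 s * k1 s - 10 * \<kappa> s * \<kappa> s * k2 s + 2 * \<kappa> s * \<kappa> s * \<kappa> s * c * c + \<kappa> s * \<kappa> s * \<kappa> s * \<kappa> s * \<kappa> s) + \<rho> * (k2 s - \<kappa> s * c * c - \<kappa> s * \<kappa> s * \<kappa> s) - \<rho> * (\<kappa> s * \<kappa> s * \<kappa> s)"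
    unfolding Ls curvR_def by (simp add: frs[OF s]; simp add: algebra_simps)
  have r3: "amb \<rho> (covT \<rho> \<gamma> (Suc (Suc (Suc (Suc (Suc 0))))) s
        + curvR \<rho> (covT \<rho> \<gamma> (Suc (Suc (Suc 0))) s) (covT \<rho> \<gamma> 0 s) (covT \<rho> \<gamma> 0 s)
        - curvR \<rho> (covT \<rho> \<gamma> (Suc (Suc 0)) s) (covT \<rho> \<gamma> (Suc 0) s) (covT \<rho> \<gamma> 0 s)) (B s) = (4 * k3 s * c - 4 * k1 s * c * c * c - 9 * \<kappa> s * \<kappa> s * k1 s * c) + \<rho> * (2 * k1 s * c)"
    unfolding Ls curvR_def by (simp add: frs[OF s]; simp add: algebra_simps)
  show "(- 10 * k1 s * k2 s - 5 * \<kappa> s * k3 s + 5 * \<kappa> s * k1 s * c * c + 10 * \<kappa> s * \<kappa> s * \<kappa> s * k1 s) = 0" using r1 unfolding E amb_zero_left by linarith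
  show "(k4 s - 6 * k2 s * c * c + \<kappa> s * c * c * c * c - 15 * \<kappa> s * k1 s * k1 s - 10 * \<kappa> s * \<kappa> s * k2 s + 2 * \<kappa> s * \<kappa> s * \<kappa> s * c * c + \<kappa> s * \<kappa> s * \<kappa> s * \<kappa> s * \<kappa> s) + \<rho> * (k2 s - \<kappa> s * c * c - \<kappa> s * \<kappa> s * \<kappa> s) - \<rho> * (\<kappa> s * \<kappa> s * \<kappa> s) = 0" using r2 unfolding E amb_zero_left by linarith
  show "(4 * k3 s * c - 4 * k1 s * c * c * c - 9 * \<kappa> s * \<kappa> s * k1 s * c) + \<rho> * (2 * k1 s * c) = 0" using r3 unfolding E amb_zero_left by linarith
qed

end

lemma zero_deriv:
  assumes "open U" "s \<in> U" "\<forall>x\<in>U. f x = 0" "(f has_real_derivative d) (at s)"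
  shows "d = 0"
proof -
  have "((\<lambda>_. 0) has_real_derivative 0) (at s)" by simp
  then have "(f has_real_derivative 0) (at s)"
    by (rule has_field_derivative_transform_within_open[OF _ assms(1,2)]) (use assms(3) in auto)
  then show ?thesis using assms(4) DERIV_unique by blast
qed

lemma ode_k1_zero:
  fixes \<kappa> k1 k2 k3 k4 :: "real \<Rightarrow> real" and c \<rho> :: real and I :: "real set"
  assumes I: "open I" "is_interval I" and pos: "\<forall>x\<in>I. \<kappa> x > 0"
   and d1: "\<forall>x\<in>I. (\<kappa> has_real_derivative k1 x) (at x)"
   and d2: "\<forall>x\<in>I. (k1 has_real_derivative k2 x) (at x)"
   and d3: "\<forall>x\<in>I. (k2 has_real_derivative k3 x) (at x)"
   and d4: "\<forall>x\<in>I. (k3 has_real_derivative k4 x) (at x)"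
   and eA: "\<forall>x\<in>I. (- 10 * k1 x * k2 x - 5 * \<kappa> x * k3 x + 5 * \<kappa> x * k1 x * c * c + 10 * \<kappa> x * \<kappa> x * \<kappa> x * k1 x) = 0"
   and eB: "\<forall>x\<in>I. (k4 x - 6 * k2 x * c * c + \<kappa> x * c * c * c * c - 15 * \<kappa> x * k1 x * k1 x - 10 * \<kappa> x * \<kappa> x * k2 x + 2 * \<kappa> x * \<kappa> x * \<kappa> x * c * c + \<kappa> x * \<kappa> x * \<kappa> x * \<kappa> x * \<kappa> x) + \<rho> * (k2 x - \<kappa> x * c * c - \<kappa> x * \<kappa> x * \<kappa> x) - \<rho> * (\<kappa> x * \<kappa> x * \<kappa> x) = 0"
   and eE: "\<forall>x\<in>I. (4 * k3 x * c - 4 * k1 x * c * c * c - 9 * \<kappa> x * \<kappa> x * k1 x * c) + \<rho> * (2 * k1 x * c) = 0"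
  shows "\<forall>x\<in>I. k1 x = 0"
proof (rule ccontr)
  assume "\<not> (\<forall>x\<in>I. k1 x = 0)"
  then obtain s0 where s0: "s0 \<in> I" "k1 s0 \<noteq> 0" by auto
  define U where "U = I \<inter> k1 -` (- {0})"
  have cont: "continuous_on I k1"
    using d2 by (meson DERIV_isCont continuous_at_imp_continuous_on)
  have contk: "continuous_on I \<kappa>"
    using d1 by (meson DERIV_isCont continuous_at_imp_continuous_on)
  have U: "open U" unfolding U_def by (rule continuous_open_preimage[OF cont I(1)]) auto
  have s0U: "s0 \<in> U" using s0 by (simp add: U_def)
  have UI: "\<And>x. x \<in> U \<Longrightarrow> x \<in> I" and Uk: "\<And>x. x \<in> U \<Longrightarrow> k1 x \<noteq> 0" by (auto simp: U_def)
  show False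
  proof (cases "c = 0")
    case False
    have h0: "\<forall>x\<in>U. 8 * k2 x + \<kappa> x * \<kappa> x * \<kappa> x - 2 * \<rho> * \<kappa> x = 0"
    proof
      fix x assume x: "x \<in> U"
      have "5 * c * (k1 x * (8 * k2 x + \<kappa> x * \<kappa> x * \<kappa> x - 2 * \<rho> * \<kappa> x)) = - 4 * c * (- 10 * k1 x * k2 x - 5 * \<kappa> x * k3 x + 5 * \<kappa> x * k1 x * c * c + 10 * \<kappa> x * \<kappa> x * \<kappa> x * k1 x) - 5 * \<kappa> x * ((4 * k3 x * c - 4 * k1 x * c * c * c - 9 * \<kappa> x * \<kappa> x * k1 x * c) + \<rho> * (2 * k1 x * c))"
        by (simp add: algebra_simps)
      also have "\<dots> = 0" using eA eE UI[OF x] by simp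
      finally show "8 * k2 x + \<kappa> x * \<kappa> x * \<kappa> x - 2 * \<rho> * \<kappa> x = 0" using False Uk[OF x] by simp
    qed
    have h1: "\<forall>x\<in>U. 8 * k3 x + 3 * \<kappa> x * \<kappa> x * k1 x - 2 * \<rho> * k1 x = 0"
    proof
      fix x assume x: "x \<in> U"
      have xI: "x \<in> I" using UI[OF x] .
      have "((\<lambda>x. 8 * k2 x + \<kappa> x * \<kappa> x * \<kappa> x - 2 * \<rho> * \<kappa> x) has_real_derivative (8 * k3 x + 3 * \<kappa> x * \<kappa> x * k1 x - 2 * \<rho> * k1 x)) (at x)"
        apply (rule DERIV_cong)
         apply (rule derivative_intros d1[rule_format, OF xI] d2[rule_format, OF xI] d3[rule_format, OF xI])+
        apply (simp add: algebra_simps)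
        done
      then show "8 * k3 x + 3 * \<kappa> x * \<kappa> x * k1 x - 2 * \<rho> * k1 x = 0"
        by (rule zero_deriv[OF U x h0, rotated])
    qed
    have q: "\<forall>x\<in>U. 8 * c * c + 21 * \<kappa> x * \<kappa> x - 6 * \<rho> = 0"
    proof
      fix x assume x: "x \<in> U"
      have "c * (k1 x * (8 * c * c + 21 * \<kappa> x * \<kappa> x - 6 * \<rho>)) = c * (8 * k3 x + 3 * \<kappa> x * \<kappa> x * k1 x - 2 * \<rho> * k1 x) - 2 * ((4 * k3 x * c - 4 * k1 x * c * c * c - 9 * \<kappa> x * \<kappa> x * k1 x * c) + \<rho> * (2 * k1 x * c))"
        by (simp add: algebra_simps)
      also have "\<dots> = 0" using h1 eE UI[OF x] x by simp
      finally show "8 * c * c + 21 * \<kappa> x * \<kappa> x - 6 * \<rho> = 0" using False Uk[OF x] by simp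
    qed
    have "((\<lambda>x. 8 * c * c + 21 * \<kappa> x * \<kappa> x - 6 * \<rho>) has_real_derivative (42 * \<kappa> s0 * k1 s0)) (at s0)"
      apply (rule DERIV_cong)
       apply (rule derivative_intros d1[rule_format, OF s0(1)])+
      apply (simp add: algebra_simps)
      done
    then have "42 * \<kappa> s0 * k1 s0 = 0" by (rule zero_deriv[OF U s0U q, rotated])
    then show False using pos s0 by auto
  next
    case True
    have Tq: "\<forall>x\<in>I. \<kappa> x * k3 x + 2 * k1 x * k2 x - 2 * \<kappa> x * \<kappa> x * \<kappa> x * k1 x = 0"
      using eA True by (auto simp: algebra_simps)
    have Tq': "\<forall>x\<in>I. 3 * k1 x * k3 x + \<kappa> x * k4 x + 2 * k2 x * k2 x - 6 * \<kappa> x * \<kappa> x * k1 x * k1 x - 2 * \<kappa> x * \<kappa> x * \<kappa> x * k2 x = 0"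
    proof
      fix x assume xI: "x \<in> I"
      have "((\<lambda>x. \<kappa> x * k3 x + 2 * k1 x * k2 x - 2 * \<kappa> x * \<kappa> x * \<kappa> x * k1 x) has_real_derivative (3 * k1 x * k3 x + \<kappa> x * k4 x + 2 * k2 x * k2 x - 6 * \<kappa> x * \<kappa> x * k1 x * k1 x - 2 * \<kappa> x * \<kappa> x * \<kappa> x * k2 x)) (at x)"
        apply (rule DERIV_cong)
         apply (rule derivative_intros d1[rule_format, OF xI] d2[rule_format, OF xI] d3[rule_format, OF xI] d4[rule_format, OF xI])+
        apply (simp add: algebra_simps)
        done
      then show "3 * k1 x * k3 x + \<kappa> x * k4 x + 2 * k2 x * k2 x - 6 * \<kappa> x * \<kappa> x * k1 x * k1 x - 2 * \<kappa> x * \<kappa> x * \<kappa> x * k2 x = 0"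
        by (rule zero_deriv[OF I(1) xI Tq, rotated])
    qed
    have Nq: "\<forall>x\<in>I. k4 x + \<rho> * k2 x - 15 * \<kappa> x * k1 x * k1 x - 10 * \<kappa> x * \<kappa> x * k2 x - 2 * \<rho> * \<kappa> x * \<kappa> x * \<kappa> x + \<kappa> x * \<kappa> x * \<kappa> x * \<kappa> x * \<kappa> x = 0"
      using eB True by (auto simp: algebra_simps)
    have Rq: "\<forall>x\<in>I. (- 6 * k1 x * k1 x * k2 x + 2 * \<kappa> x * k2 x * k2 x - \<kappa> x * \<kappa> x * k2 x * \<rho> + 15 * \<kappa> x * \<kappa> x * \<kappa> x * k1 x * k1 x + 8 * \<kappa> x * \<kappa> x * \<kappa> x * \<kappa> x * k2 x + 2 * \<kappa> x * \<kappa> x * \<kappa> x * \<kappa> x * \<kappa> x * \<rho> - \<kappa> x * \<kappa> x * \<kappa> x * \<kappa> x * \<kappa> x * \<kappa> x * \<kappa> x) = 0"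
    proof
      fix x assume xI: "x \<in> I"
      have "(- 6 * k1 x * k1 x * k2 x + 2 * \<kappa> x * k2 x * k2 x - \<kappa> x * \<kappa> x * k2 x * \<rho> + 15 * \<kappa> x * \<kappa> x * \<kappa> x * k1 x * k1 x + 8 * \<kappa> x * \<kappa> x * \<kappa> x * \<kappa> x * k2 x + 2 * \<kappa> x * \<kappa> x * \<kappa> x * \<kappa> x * \<kappa> x * \<rho> - \<kappa> x * \<kappa> x * \<kappa> x * \<kappa> x * \<kappa> x * \<kappa> x * \<kappa> x) = \<kappa> x * (3 * k1 x * k3 x + \<kappa> x * k4 x + 2 * k2 x * k2 x - 6 * \<kappa> x * \<kappa> x * k1 x * k1 x - 2 * \<kappa> x * \<kappa> x * \<kappa> x * k2 x)
          - 3 * k1 x * (\<kappa> x * k3 x + 2 * k1 x * k2 x - 2 * \<kappa> x * \<kappa> x * \<kappa> x * k1 x)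
          - \<kappa> x * \<kappa> x * (k4 x + \<rho> * k2 x - 15 * \<kappa> x * k1 x * k1 x - 10 * \<kappa> x * \<kappa> x * k2 x - 2 * \<rho> * \<kappa> x * \<kappa> x * \<kappa> x + \<kappa> x * \<kappa> x * \<kappa> x * \<kappa> x * \<kappa> x)"
        by (simp add: algebra_simps)
      then show "(- 6 * k1 x * k1 x * k2 x + 2 * \<kappa> x * k2 x * k2 x - \<kappa> x * \<kappa> x * k2 x * \<rho> + 15 * \<kappa> x * \<kappa> x * \<kappa> x * k1 x * k1 x + 8 * \<kappa> x * \<kappa> x * \<kappa> x * \<kappa> x * k2 x + 2 * \<kappa> x * \<kappa> x * \<kappa> x * \<kappa> x * \<kappa> x * \<rho> - \<kappa> x * \<kappa> x * \<kappa> x * \<kappa> x * \<kappa> x * \<kappa> x * \<kappa> x) = 0" using Tq Tq' Nq xI by simp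
    qed
    have "\<exists>K0. \<forall>x\<in>I. 2 * \<kappa> x * k2 x + k1 x * k1 x - \<kappa> x * \<kappa> x * \<kappa> x * \<kappa> x = K0"
    proof (rule has_field_derivative_zero_constant)
      show "convex I" using I(2) by (simp add: is_interval_convex)
    next
      fix x assume xI: "x \<in> I"
      have "((\<lambda>x. 2 * \<kappa> x * k2 x + k1 x * k1 x - \<kappa> x * \<kappa> x * \<kappa> x * \<kappa> x) has_real_derivative 2 * (\<kappa> x * k3 x + 2 * k1 x * k2 x - 2 * \<kappa> x * \<kappa> x * \<kappa> x * k1 x)) (at x)"
        apply (rule DERIV_cong)
         apply (rule derivative_intros d1[rule_format, OF xI] d2[rule_format, OF xI] d3[rule_format, OF xI])+
        apply (simp add: algebra_simps)
        done
      then show "((\<lambda>x. 2 * \<kappa> x * k2 x + k1 x * k1 x - \<kappa> x * \<kappa> x * \<kappa> x * \<kappa> x) has_real_derivative 0) (at x within I)"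
        using Tq xI by (simp add: has_field_derivative_at_within)
    qed
    then obtain K0 where K0: "\<forall>x\<in>I. 2 * \<kappa> x * k2 x + k1 x * k1 x - \<kappa> x * \<kappa> x * \<kappa> x * \<kappa> x = K0" by blast
    have hq: "\<forall>x\<in>I. (K0 * K0 - 8 * k1 x * k1 x * K0 + 7 * k1 x * k1 x * k1 x * k1 x - \<kappa> x * \<kappa> x * K0 * \<rho> + \<kappa> x * \<kappa> x * k1 x * k1 x * \<rho> + 10 * \<kappa> x * \<kappa> x * \<kappa> x * \<kappa> x * K0 + 14 * \<kappa> x * \<kappa> x * \<kappa> x * \<kappa> x * k1 x * k1 x + 3 * \<kappa> x * \<kappa> x * \<kappa> x * \<kappa> x * \<kappa> x * \<kappa> x * \<rho> + 7 * \<kappa> x * \<kappa> x * \<kappa> x * \<kappa> x * \<kappa> x * \<kappa> x * \<kappa> x * \<kappa> x) = 0"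
    proof
      fix x assume xI: "x \<in> I"
      have "(K0 * K0 - 8 * k1 x * k1 x * K0 + 7 * k1 x * k1 x * k1 x * k1 x - \<kappa> x * \<kappa> x * K0 * \<rho> + \<kappa> x * \<kappa> x * k1 x * k1 x * \<rho> + 10 * \<kappa> x * \<kappa> x * \<kappa> x * \<kappa> x * K0 + 14 * \<kappa> x * \<kappa> x * \<kappa> x * \<kappa> x * k1 x * k1 x + 3 * \<kappa> x * \<kappa> x * \<kappa> x * \<kappa> x * \<kappa> x * \<kappa> x * \<rho> + 7 * \<kappa> x * \<kappa> x * \<kappa> x * \<kappa> x * \<kappa> x * \<kappa> x * \<kappa> x * \<kappa> x) = 2 * \<kappa> x * (- 6 * k1 x * k1 x * k2 x + 2 * \<kappa> x * k2 x * k2 x - \<kappa> x * \<kappa> x * k2 x * \<rho> + 15 * \<kappa> x * \<kappa> x * \<kappa> x * k1 x * k1 x + 8 * \<kappa> x * \<kappa> x * \<kappa> x * \<kappa> x * k2 x + 2 * \<kappa> x * \<kappa> x * \<kappa> x * \<kappa> x * \<kappa> x * \<rho> - \<kappa> x * \<kappa> x * \<kappa> x * \<kappa> x * \<kappa> x * \<kappa> x * \<kappa> x)"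
        unfolding K0[rule_format, OF xI, symmetric] by (simp add: algebra_simps)
      then show "(K0 * K0 - 8 * k1 x * k1 x * K0 + 7 * k1 x * k1 x * k1 x * k1 x - \<kappa> x * \<kappa> x * K0 * \<rho> + \<kappa> x * \<kappa> x * k1 x * k1 x * \<rho> + 10 * \<kappa> x * \<kappa> x * \<kappa> x * \<kappa> x * K0 + 14 * \<kappa> x * \<kappa> x * \<kappa> x * \<kappa> x * k1 x * k1 x + 3 * \<kappa> x * \<kappa> x * \<kappa> x * \<kappa> x * \<kappa> x * \<kappa> x * \<rho> + 7 * \<kappa> x * \<kappa> x * \<kappa> x * \<kappa> x * \<kappa> x * \<kappa> x * \<kappa> x * \<kappa> x) = 0" using Rq xI by simp
    qed
    have Dq: "\<forall>x\<in>I. (- 16 * k1 x * k2 x * K0 + 28 * k1 x * k1 x * k1 x * k2 x - 2 * \<kappa> x * k1 x * K0 * \<rho> + 2 * \<kappa> x * k1 x * k1 x * k1 x * \<rho> + 2 * \<kappa> x * \<kappa> x * k1 x * k2 x * \<rho> + 40 * \<kappa> x * \<kappa> x * \<kappa> x * k1 x * K0 + 56 * \<kappa> x * \<kappa> x * \<kappa> x * k1 x * k1 x * k1 x + 28 * \<kappa> x * \<kappa> x * \<kappa> x * \<kappa> x * k1 x * k2 x + 18 * \<kappa> x * \<kappa> x * \<kappa> x * \<kappa> x * \<kappa> x * k1 x * \<rho> + 56 * \<kappa> x * \<kappa> x * \<kappa> x * \<kappa> x * \<kappa> x * \<kappa> x * \<kappa> x * k1 x) = 0"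
    proof
      fix x assume xI: "x \<in> I"
      have "((\<lambda>x. (K0 * K0 - 8 * k1 x * k1 x * K0 + 7 * k1 x * k1 x * k1 x * k1 x - \<kappa> x * \<kappa> x * K0 * \<rho> + \<kappa> x * \<kappa> x * k1 x * k1 x * \<rho> + 10 * \<kappa> x * \<kappa> x * \<kappa> x * \<kappa> x * K0 + 14 * \<kappa> x * \<kappa> x * \<kappa> x * \<kappa> x * k1 x * k1 x + 3 * \<kappa> x * \<kappa> x * \<kappa> x * \<kappa> x * \<kappa> x * \<kappa> x * \<rho> + 7 * \<kappa> x * \<kappa> x * \<kappa> x * \<kappa> x * \<kappa> x * \<kappa> x * \<kappa> x * \<kappa> x)) has_real_derivative (- 16 * k1 x * k2 x * K0 + 28 * k1 x * k1 x * k1 x * k2 x - 2 * \<kappa> x * k1 x * K0 * \<rho> + 2 * \<kappa> x * k1 x * k1 x * k1 x * \<rho> + 2 * \<kappa> x * \<kappa> x * k1 x * k2 x * \<rho> + 40 * \<kappa> x * \<kappa> x * \<kappa> x * k1 x * K0 + 56 * \<kappa> x * \<kappa> x * \<kappa> x * k1 x * k1 x * k1 x + 28 * \<kappa> x * \<kappa> x * \<kappa> x * \<kappa> x * k1 x * k2 x + 18 * \<kappa> x * \<kappa> x * \<kappa> x * \<kappa> x * \<kappa> x * k1 x * \<rho> + 56 * \<kappa> x * \<kappa> x * \<kappa> x * \<kappa> x * \<kappa> x * \<kappa> x * \<kappa> x * k1 x)) (at x)"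
        apply (rule DERIV_cong)
         apply (rule derivative_intros d1[rule_format, OF xI] d2[rule_format, OF xI])+
        apply (simp add: algebra_simps)
        done
      then show "(- 16 * k1 x * k2 x * K0 + 28 * k1 x * k1 x * k1 x * k2 x - 2 * \<kappa> x * k1 x * K0 * \<rho> + 2 * \<kappa> x * k1 x * k1 x * k1 x * \<rho> + 2 * \<kappa> x * \<kappa> x * k1 x * k2 x * \<rho> + 40 * \<kappa> x * \<kappa> x * \<kappa> x * k1 x * K0 + 56 * \<kappa> x * \<kappa> x * \<kappa> x * k1 x * k1 x * k1 x + 28 * \<kappa> x * \<kappa> x * \<kappa> x * \<kappa> x * k1 x * k2 x + 18 * \<kappa> x * \<kappa> x * \<kappa> x * \<kappa> x * \<kappa> x * k1 x * \<rho> + 56 * \<kappa> x * \<kappa> x * \<kappa> x * \<kappa> x * \<kappa> x * \<kappa> x * \<kappa> x * k1 x) = 0" by (rule zero_deriv[OF I(1) xI hq, rotated])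
    qed
    have h2q: "\<forall>x\<in>U. (- 8 * K0 * K0 + 22 * k1 x * k1 x * K0 - 14 * k1 x * k1 x * k1 x * k1 x - \<kappa> x * \<kappa> x * K0 * \<rho> + \<kappa> x * \<kappa> x * k1 x * k1 x * \<rho> + 46 * \<kappa> x * \<kappa> x * \<kappa> x * \<kappa> x * K0 + 56 * \<kappa> x * \<kappa> x * \<kappa> x * \<kappa> x * k1 x * k1 x + 19 * \<kappa> x * \<kappa> x * \<kappa> x * \<kappa> x * \<kappa> x * \<kappa> x * \<rho> + 70 * \<kappa> x * \<kappa> x * \<kappa> x * \<kappa> x * \<kappa> x * \<kappa> x * \<kappa> x * \<kappa> x) = 0"
    proof
      fix x assume x: "x \<in> U"
      have xI: "x \<in> I" using UI[OF x] .
      have "\<kappa> x * (- 16 * k1 x * k2 x * K0 + 28 * k1 x * k1 x * k1 x * k2 x - 2 * \<kappa> x * k1 x * K0 * \<rho> + 2 * \<kappa> x * k1 x * k1 x * k1 x * \<rho> + 2 * \<kappa> x * \<kappa> x * k1 x * k2 x * \<rho> + 40 * \<kappa> x * \<kappa> x * \<kappa> x * k1 x * K0 + 56 * \<kappa> x * \<kappa> x * \<kappa> x * k1 x * k1 x * k1 x + 28 * \<kappa> x * \<kappa> x * \<kappa> x * \<kappa> x * k1 x * k2 x + 18 * \<kappa> x * \<kappa> x * \<kappa> x * \<kappa> x * \<kappa> x * k1 x * \<rho> + 56 * \<kappa> x * \<kappa> x * \<kappa> x * \<kappa> x * \<kappa> x * \<kappa> x * \<kappa> x * k1 x) - k1 x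 * (- 8 * K0 * K0 + 22 * k1 x * k1 x * K0 - 14 * k1 x * k1 x * k1 x * k1 x - \<kappa> x * \<kappa> x * K0 * \<rho> + \<kappa> x * \<kappa> x * k1 x * k1 x * \<rho> + 46 * \<kappa> x * \<kappa> x * \<kappa> x * \<kappa> x * K0 + 56 * \<kappa> x * \<kappa> x * \<kappa> x * \<kappa> x * k1 x * k1 x + 19 * \<kappa> x * \<kappa> x * \<kappa> x * \<kappa> x * \<kappa> x * \<kappa> x * \<rho> + 70 * \<kappa> x * \<kappa> x * \<kappa> x * \<kappa> x * \<kappa> x * \<kappa> x * \<kappa> x * \<kappa> x) = k1 x * (- 8 * K0 + 14 * k1 x * k1 x + \<kappa> x * \<kappa> x * \<rho> + 14 * \<kappa> x * \<kappa> x * \<kappa> x * \<kappa> x) * (2 * \<kappa> x * k2 x - (K0 - k1 x * k1 x + \<kappa> x * \<kappa> x * \<kappa> x * \<kappa> x))"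
        by (simp add: algebra_simps)
      also have "\<dots> = 0"
      proof -
        have "2 * \<kappa> x * k2 x - (K0 - k1 x * k1 x + \<kappa> x * \<kappa> x * \<kappa> x * \<kappa> x) = 0"
          using K0[rule_format, OF xI] by linarith
        then show ?thesis by simp
      qed
      finally have "k1 x * (- 8 * K0 * K0 + 22 * k1 x * k1 x * K0 - 14 * k1 x * k1 x * k1 x * k1 x - \<kappa> x * \<kappa> x * K0 * \<rho> + \<kappa> x * \<kappa> x * k1 x * k1 x * \<rho> + 46 * \<kappa> x * \<kappa> x * \<kappa> x * \<kappa> x * K0 + 56 * \<kappa> x * \<kappa> x * \<kappa> x * \<kappa> x * k1 x * k1 x + 19 * \<kappa> x * \<kappa> x * \<kappa> x * \<kappa> x * \<kappa> x * \<kappa> x * \<rho> + 70 * \<kappa> x * \<kappa> x * \<kappa> x * \<kappa> x * \<kappa> x * \<kappa> x * \<kappa> x * \<kappa> x) = 0" using Dq xI by simp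
      then show "(- 8 * K0 * K0 + 22 * k1 x * k1 x * K0 - 14 * k1 x * k1 x * k1 x * k1 x - \<kappa> x * \<kappa> x * K0 * \<rho> + \<kappa> x * \<kappa> x * k1 x * k1 x * \<rho> + 46 * \<kappa> x * \<kappa> x * \<kappa> x * \<kappa> x * K0 + 56 * \<kappa> x * \<kappa> x * \<kappa> x * \<kappa> x * k1 x * k1 x + 19 * \<kappa> x * \<kappa> x * \<kappa> x * \<kappa> x * \<kappa> x * \<kappa> x * \<rho> + 70 * \<kappa> x * \<kappa> x * \<kappa> x * \<kappa> x * \<kappa> x * \<kappa> x * \<kappa> x * \<kappa> x) = 0" using Uk[OF x] by simp
    qed
    define p where "p = [:0, 0, 0, 0, (- 4536 * K0 * K0 * K0), 0, (- 3528 * K0 * K0 * \<rho>), 0, (- 726 * K0 * \<rho> * \<rho> + 90720 * K0 * K0), 0, (- 48 * \<rho> * \<rho> * \<rho> + 32256 * K0 * \<rho>), 0, (2548 * \<rho> * \<rho> + 127008 * K0), 0, (14112 * \<rho>):]"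
    have pq: "\<forall>x\<in>U. poly p (\<kappa> x) = 0"
    proof
      fix x assume x: "x \<in> U"
      have xI: "x \<in> I" using UI[OF x] .
      have "poly p (\<kappa> x) = (6 * K0 + 3 * \<kappa> x * \<kappa> x * \<rho> + 84 * \<kappa> x * \<kappa> x * \<kappa> x * \<kappa> x) * (6 * K0 + 3 * \<kappa> x * \<kappa> x * \<rho> + 84 * \<kappa> x * \<kappa> x * \<kappa> x * \<kappa> x) * (K0 * K0 - 8 * k1 x * k1 x * K0 + 7 * k1 x * k1 x * k1 x * k1 x - \<kappa> x * \<kappa> x * K0 * \<rho> + \<kappa> x * \<kappa> x * k1 x * k1 x * \<rho> + 10 * \<kappa> x * \<kappa> x * \<kappa> x * \<kappa> x * K0 + 14 * \<kappa> x * \<kappa> x * \<kappa> x * \<kappa> x * k1 x * k1 x + 3 * \<kappa> x * \<kappa> x * \<kappa> x * \<kappa> x * \<kappa> x * \<kappa> x * \<rho> + 7 * \<kappa> x * \<kappa> x * \<kappa> x * \<kappa> x * \<kappa> x * \<kappa> x * \<kappa> x * \<kappa> x) - ((- 8 * K0 * K0 + 22 * k1 x * k1 x * K0 - 14 * k1 x * k1 x * k1 x * k1 x - \<kappa> x * \<kappa> x * K0 * \<rho> + \<kappa> x * \<kappa> x * k1 x * k1 x * \<rho> + 46 * \<kappa> x * \<kappa> x * \<kappa> x * \<kappa> x * K0 + 56 * \<kappa> x * \<kappa> x * \<kappa> x * \<kappa> x * k1 x * k1 x + 19 * \<kappa> x * \<kappa> x * \<kappa> x * \<kappa> x * \<kappa>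 x * \<kappa> x * \<rho> + 70 * \<kappa> x * \<kappa> x * \<kappa> x * \<kappa> x * \<kappa> x * \<kappa> x * \<kappa> x * \<kappa> x) + 2 * (K0 * K0 - 8 * k1 x * k1 x * K0 + 7 * k1 x * k1 x * k1 x * k1 x - \<kappa> x * \<kappa> x * K0 * \<rho> + \<kappa> x * \<kappa> x * k1 x * k1 x * \<rho> + 10 * \<kappa> x * \<kappa> x * \<kappa> x * \<kappa> x * K0 + 14 * \<kappa> x * \<kappa> x * \<kappa> x * \<kappa> x * k1 x * k1 x + 3 * \<kappa> x * \<kappa> x * \<kappa> x * \<kappa> x * \<kappa> x * \<kappa> x * \<rho> + 7 * \<kappa> x * \<kappa> x * \<kappa> x * \<kappa> x * \<kappa> x * \<kappa> x * \<kappa> x * \<kappa> x)) * (7 * ((6 * K0 + 3 * \<kappa> x * \<kappa> x * \<rho> + 84 * \<kappa> x * \<kappa> x * \<kappa> x * \<kappa> x) * (k1 x * k1 x) + (6 * K0 * K0 + 3 * \<kappa> x * \<kappa> x * K0 * \<rho> - 66 * \<kappa> x * \<kappa> x * \<kappa> x * \<kappa> x * K0 - 25 * \<kappa> x * \<kappa> x * \<kappa> x * \<kappa> x * \<kappa> x * \<kappa> x * \<rho> - 84 * \<kappa> x * \<kappa> x * \<kappa> x * \<kappa> x * \<kappa> x * \<kappa> x * \<kappa> x * \<kappa> x)) + (- 8 * K0 + \<kappa> x * \<kappa> x * \<rho> + 14 * \<kappa> x * \<kappa> x * \<kappa> x * \<kappa> x) * (6 * K0 + 3 * \<kappa> x *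 \<kappa> x * \<rho> + 84 * \<kappa> x * \<kappa> x * \<kappa> x * \<kappa> x))"
        unfolding p_def by (simp add: algebra_simps)
      then show "poly p (\<kappa> x) = 0" using hq h2q x xI by simp
    qed
    show False
    proof (cases "p = 0")
      case True
      then have r0: "\<rho> = 0" and K00: "K0 = 0" unfolding p_def by (simp_all add: pCons_eq_0_iff)
      have ha: "(K0 * K0 - 8 * k1 s0 * k1 s0 * K0 + 7 * k1 s0 * k1 s0 * k1 s0 * k1 s0 - \<kappa> s0 * \<kappa> s0 * K0 * \<rho> + \<kappa> s0 * \<kappa> s0 * k1 s0 * k1 s0 * \<rho> + 10 * \<kappa> s0 * \<kappa> s0 * \<kappa> s0 * \<kappa> s0 * K0 + 14 * \<kappa> s0 * \<kappa> s0 * \<kappa> s0 * \<kappa> s0 * k1 s0 * k1 s0 + 3 * \<kappa> s0 * \<kappa> s0 * \<kappa> s0 * \<kappa> s0 * \<kappa> s0 * \<kappa> s0 * \<rho> + 7 * \<kappa> s0 * \<kappa> s0 * \<kappa> s0 * \<kappa> s0 * \<kappa> s0 * \<kappa> s0 * \<kappa> s0 * \<kappa> s0) = 0" using hq s0(1) by blast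
      have hb: "(- 8 * K0 * K0 + 22 * k1 s0 * k1 s0 * K0 - 14 * k1 s0 * k1 s0 * k1 s0 * k1 s0 - \<kappa> s0 * \<kappa> s0 * K0 * \<rho> + \<kappa> s0 * \<kappa> s0 * k1 s0 * k1 s0 * \<rho> + 46 * \<kappa> s0 * \<kappa> s0 * \<kappa> s0 * \<kappa> s0 * K0 + 56 * \<kappa> s0 * \<kappa> s0 * \<kappa> s0 * \<kappa> s0 * k1 s0 * k1 s0 + 19 * \<kappa> s0 * \<kappa> s0 * \<kappa> s0 * \<kappa> s0 * \<kappa> s0 * \<kappa> s0 * \<rho> + 70 * \<kappa> s0 * \<kappa> s0 * \<kappa> s0 * \<kappa> s0 * \<kappa> s0 * \<kappa> s0 * \<kappa> s0 * \<kappa> s0) = 0" using h2q s0U by blast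
      have "(6 * K0 + 3 * \<kappa> s0 * \<kappa> s0 * \<rho> + 84 * \<kappa> s0 * \<kappa> s0 * \<kappa> s0 * \<kappa> s0) * (k1 s0 * k1 s0) - (6 * K0 * K0 + 3 * \<kappa> s0 * \<kappa> s0 * K0 * \<rho> - 66 * \<kappa> s0 * \<kappa> s0 * \<kappa> s0 * \<kappa> s0 * K0 - 25 * \<kappa> s0 * \<kappa> s0 * \<kappa> s0 * \<kappa> s0 * \<kappa> s0 * \<kappa> s0 * \<rho> - 84 * \<kappa> s0 * \<kappa> s0 * \<kappa> s0 * \<kappa> s0 * \<kappa> s0 * \<kappa> s0 * \<kappa> s0 * \<kappa> s0) = (- 8 * K0 * K0 + 22 * k1 s0 * k1 s0 * K0 - 14 * k1 s0 * k1 s0 * k1 s0 * k1 s0 - \<kappa> s0 * \<kappa> s0 * K0 * \<rho> + \<kappa> s0 * \<kappa> s0 * k1 s0 * k1 s0 * \<rho> + 46 * \<kappa> s0 * \<kappa> s0 * \<kappa> s0 * \<kappa> s0 * K0 + 56 * \<kappa> s0 * \<kappa> s0 * \<kappa> s0 * \<kappa> s0 * k1 s0 * k1 s0 + 19 * \<kappa> s0 * \<kappa> s0 * \<kappa> s0 * \<kappa> s0 * \<kappa> s0 * \<kappa> s0 * \<rho> + 70 * \<kappa> s0 * \<kappa> s0 * \<kappa> s0 * \<kappa> s0 * \<kappa> s0 * \<kappa> s0 * \<kappa> s0 * \<kappa> s0) + 2 * (K0 * K0 - 8 * k1 s0 * k1 s0 * K0 + 7 * k1 s0 * k1 s0 *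 k1 s0 * k1 s0 - \<kappa> s0 * \<kappa> s0 * K0 * \<rho> + \<kappa> s0 * \<kappa> s0 * k1 s0 * k1 s0 * \<rho> + 10 * \<kappa> s0 * \<kappa> s0 * \<kappa> s0 * \<kappa> s0 * K0 + 14 * \<kappa> s0 * \<kappa> s0 * \<kappa> s0 * \<kappa> s0 * k1 s0 * k1 s0 + 3 * \<kappa> s0 * \<kappa> s0 * \<kappa> s0 * \<kappa> s0 * \<kappa> s0 * \<kappa> s0 * \<rho> + 7 * \<kappa> s0 * \<kappa> s0 * \<kappa> s0 * \<kappa> s0 * \<kappa> s0 * \<kappa> s0 * \<kappa> s0 * \<kappa> s0)"
        by (simp add: algebra_simps)
      also have "\<dots> = 0" by (simp only: ha hb)
      finally have "(6 * K0 + 3 * \<kappa> s0 * \<kappa> s0 * \<rho> + 84 * \<kappa> s0 * \<kappa> s0 * \<kappa> s0 * \<kappa> s0) * (k1 s0 * k1 s0) - (6 * K0 * K0 + 3 * \<kappa> s0 * \<kappa> s0 * K0 * \<rho> - 66 * \<kappa> s0 * \<kappa> s0 * \<kappa> s0 * \<kappa> s0 * K0 - 25 * \<kappa> s0 * \<kappa> s0 * \<kappa> s0 * \<kappa> s0 * \<kappa> s0 * \<kappa> s0 * \<rho> - 84 * \<kappa> s0 * \<kappa> s0 * \<kappa> s0 * \<kappa> s0 * \<kappa> s0 * \<kappa> s0 * \<kappa> s0 * \<kappa> s0) = 0" .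
      then have "84 * (\<kappa> s0 * \<kappa> s0 * \<kappa> s0 * \<kappa> s0) * (k1 s0 * k1 s0 + \<kappa> s0 * \<kappa> s0 * \<kappa> s0 * \<kappa> s0) = 0"
        using r0 K00 by (simp add: algebra_simps)
      moreover have "84 * (\<kappa> s0 * \<kappa> s0 * \<kappa> s0 * \<kappa> s0) * (k1 s0 * k1 s0 + \<kappa> s0 * \<kappa> s0 * \<kappa> s0 * \<kappa> s0) > 0"
        using pos s0 by (intro mult_pos_pos add_nonneg_pos) auto
      ultimately show False by linarith
    next
      case False
      obtain e where e: "e > 0" "ball s0 e \<subseteq> U" using U s0U open_contains_ball by blast
      have fin: "finite (\<kappa> ` ball s0 e)"
        by (rule finite_subset[OF _ poly_roots_finite[OF False]]) (use e pq in auto)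
      have conn: "connected (\<kappa> ` ball s0 e)"
        by (rule connected_continuous_image[OF continuous_on_subset[OF contk] connected_ball]) (use e UI in auto)
      obtain a where a: "\<kappa> ` ball s0 e = {a}" using connected_finite_iff_sing[OF conn] fin e(1) by auto
      have ka: "\<And>x. x \<in> ball s0 e \<Longrightarrow> \<kappa> x = a" using a by blast
      have A0: "\<forall>x\<in>ball s0 e. \<kappa> x - \<kappa> s0 = 0" using ka[of s0] ka e(1) by simp
      have B0: "((\<lambda>x. \<kappa> x - \<kappa> s0) has_real_derivative k1 s0) (at s0)"
        apply (rule DERIV_cong)
         apply (rule derivative_intros d1[rule_format, OF s0(1)])+
        apply simp
        done
      have "k1 s0 = 0" by (rule zero_deriv[OF open_ball _ A0 B0]) (simp add: e(1))
      then show False using s0 by simp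
    qed
  qed
qed

lemma CnR: "Cn (Suc n) I (f::real\<Rightarrow>real) \<Longrightarrow> \<exists>f'. (\<forall>s\<in>I. (f has_real_derivative f' s) (at s)) \<and> Cn n I f'"
  using CnE[of n I f] by (simp add: has_real_derivative_iff_has_vector_derivative)

lemma deriv_eq_on:
  assumes "open U" "s \<in> U" "\<forall>x\<in>U. f x = g x" "(f has_vector_derivative a) (at s)" "(g has_vector_derivative b) (at s)"
  shows "a = b"
proof -
  have "(g has_vector_derivative a) (at s)"
    by (rule has_vector_derivative_transform_within_open[OF assms(4) assms(1,2)]) (use assms(3) in auto)
  then show ?thesis using assms(5) vector_derivative_unique_at by blast
qed

lemma deriv_const_on:
  assumes "open U" "s \<in> U" "\<forall>x\<in>U. f x = c" "(f has_vector_derivative a) (at s)"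
  shows "a = 0"
  by (rule deriv_eq_on[OF assms(1,2,3,4)]) simp

context tri
begin

lemma kappa_Cn: "Cn n I \<kappa>"
proof -
  have e: "\<kappa> s = sqrt (amb \<rho> (covT \<rho> \<gamma> (Suc 0) s) (covT \<rho> \<gamma> (Suc 0) s))" if s: "s \<in> I" for s
  proof -
    have "covT \<rho> \<gamma> (Suc 0) s = \<kappa> s *\<^sub>R N s" using frs[OF s] by simp
    then have "amb \<rho> (covT \<rho> \<gamma> (Suc 0) s) (covT \<rho> \<gamma> (Suc 0) s) = \<kappa> s * \<kappa> s" using frs[OF s] by simp
    then show ?thesis using frs(3)[OF s] by simp
  qed
  have pos: "\<forall>s\<in>I. amb \<rho> (covT \<rho> \<gamma> (Suc 0) s) (covT \<rho> \<gamma> (Suc 0) s) > 0"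
  proof
    fix s assume s: "s \<in> I"
    have "covT \<rho> \<gamma> (Suc 0) s = \<kappa> s *\<^sub>R N s" using frs[OF s] by simp
    then show "amb \<rho> (covT \<rho> \<gamma> (Suc 0) s) (covT \<rho> \<gamma> (Suc 0) s) > 0" using frs[OF s] by simp
  qed
  have C: "Cn n I (\<lambda>s. sqrt (amb \<rho> (covT \<rho> \<gamma> (Suc 0) s) (covT \<rho> \<gamma> (Suc 0) s)))"
    by (rule Cn_sqrt[OF Cn_amb[OF covT_Cn covT_Cn] pos])
  show ?thesis by (rule Cn_cong[OF I_open _ C]) (use e in auto)
qed

lemma dir2:
  assumes th: "triharmonic_on \<rho> I \<gamma>" and tc: "\<forall>x\<in>I. \<tau> x = c"
  shows "\<exists>k. \<forall>s\<in>I. \<kappa> s = k"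
proof -
  obtain k1 where k1: "\<forall>s\<in>I. (\<kappa> has_real_derivative k1 s) (at s)" "Cn (Suc (Suc (Suc 0))) I k1"
    using CnR[OF kappa_Cn[of "Suc (Suc (Suc (Suc 0)))"]] by blast
  obtain k2 where k2: "\<forall>s\<in>I. (k1 has_real_derivative k2 s) (at s)" "Cn (Suc (Suc 0)) I k2"
    using CnR[OF k1(2)] by blast
  obtain k3 where k3: "\<forall>s\<in>I. (k2 has_real_derivative k3 s) (at s)" "Cn (Suc 0) I k3"
    using CnR[OF k2(2)] by blast
  obtain k4 where k4: "\<forall>s\<in>I. (k3 has_real_derivative k4 s) (at s)"
    using CnR[OF k3(2)] by blast
  interpret t2: tri2 \<rho> I \<gamma> \<kappa> \<tau> N B c k1 k2 k3 k4
    by unfold_locales (use tc k1 k2 k3 k4 in auto)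
  have "\<forall>x\<in>I. k1 x = 0"
    by (rule ode_k1_zero[OF I_open I_int _ k1(1) k2(1) k3(1) k4])
       (use frs(3) t2.eqs[OF th] in auto)
  then have "\<forall>x\<in>I. (\<kappa> has_real_derivative 0) (at x within I)"
    using k1(1) by (metis has_field_derivative_at_within)
  then show ?thesis
    using has_field_derivative_zero_constant[of I \<kappa>] I_int is_interval_convex by blast
qed

lemma gg_sf: "s \<in> I \<Longrightarrow> \<rho> \<noteq> 0 \<Longrightarrow> amb \<rho> (\<gamma> s) (\<gamma> s) = 1 / \<rho>"
  using uc unfolding unit_speed_curve_in_def space_form_def by (auto split: if_splits)

lemma amb_has: "(f has_vector_derivative f') (at s) \<Longrightarrow> (g has_vector_derivative g') (at s) \<Longrightarrow>
   ((\<lambda>x. amb \<rho> (f x) (g x)) has_vector_derivative (amb \<rho> (f s) g' + amb \<rho> f' (g s))) (at s)"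
  by (rule bounded_bilinear.has_vector_derivative[OF bb_amb])

lemma tan0: "s \<in> I \<Longrightarrow> \<rho> \<noteq> 0 \<Longrightarrow> amb \<rho> (\<gamma> s) (covT \<rho> \<gamma> k s) = 0"
proof (induction k arbitrary: s)
  case 0
  have "amb \<rho> (\<gamma> s) (T s) + amb \<rho> (T s) (\<gamma> s) = 0"
    by (rule deriv_const_on[OF I_open 0(1) _ amb_has[OF g_der[OF 0(1)] g_der[OF 0(1)]]])
       (use gg_sf 0 in auto)
  then show ?case by (simp add: amb_sym)
next
  case (Suc k)
  have d: "((\<lambda>x. amb \<rho> (\<gamma> x) (covT \<rho> \<gamma> k x)) has_vector_derivative
     (amb \<rho> (\<gamma> s) (vector_derivative (covT \<rho> \<gamma> k) (at s)) + amb \<rho> (T s) (covT \<rho> \<gamma> k s))) (at s)"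
    by (rule amb_has[OF g_der[OF Suc(2)] covT_has[OF Suc(2)]])
  have "amb \<rho> (\<gamma> s) (vector_derivative (covT \<rho> \<gamma> k) (at s)) + amb \<rho> (T s) (covT \<rho> \<gamma> k s) = 0"
    by (rule deriv_const_on[OF I_open Suc(2) _ d]) (use Suc in auto)
  moreover have "amb \<rho> (\<gamma> s) (covT \<rho> \<gamma> (Suc k) s) = amb \<rho> (\<gamma> s) (vector_derivative (covT \<rho> \<gamma> k) (at s)) + \<rho> * amb \<rho> (T s) (covT \<rho> \<gamma> k s) * amb \<rho> (\<gamma> s) (\<gamma> s)"
    by (simp add: covD_alt)
  ultimately show ?case using gg_sf[OF Suc(2,3)] Suc(3) by simp
qed

lemma tan: "s \<in> I \<Longrightarrow> \<rho> * amb \<rho> (\<gamma> s) (covT \<rho> \<gamma> k s) = 0"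
  using tan0 by (cases "\<rho> = 0") auto

lemma met: assumes s: "s \<in> I"
  shows "((\<lambda>x. amb \<rho> (covT \<rho> \<gamma> i x) (covT \<rho> \<gamma> j x)) has_vector_derivative
     (amb \<rho> (covT \<rho> \<gamma> (Suc i) s) (covT \<rho> \<gamma> j s) + amb \<rho> (covT \<rho> \<gamma> i s) (covT \<rho> \<gamma> (Suc j) s))) (at s)"
proof -
  have d: "((\<lambda>x. amb \<rho> (covT \<rho> \<gamma> i x) (covT \<rho> \<gamma> j x)) has_vector_derivative
     (amb \<rho> (covT \<rho> \<gamma> i s) (vector_derivative (covT \<rho> \<gamma> j) (at s)) + amb \<rho> (vector_derivative (covT \<rho> \<gamma> i) (at s)) (covT \<rho> \<gamma> j s))) (at s)"
    by (rule amb_has[OF covT_has[OF s] covT_has[OF s]])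
  have "amb \<rho> (covT \<rho> \<gamma> (Suc i) s) (covT \<rho> \<gamma> j s) + amb \<rho> (covT \<rho> \<gamma> i s) (covT \<rho> \<gamma> (Suc j) s)
     = amb \<rho> (covT \<rho> \<gamma> i s) (vector_derivative (covT \<rho> \<gamma> j) (at s)) + amb \<rho> (vector_derivative (covT \<rho> \<gamma> i) (at s)) (covT \<rho> \<gamma> j s)
       + amb \<rho> (T s) (covT \<rho> \<gamma> i s) * (\<rho> * amb \<rho> (\<gamma> s) (covT \<rho> \<gamma> j s))
       + amb \<rho> (T s) (covT \<rho> \<gamma> j s) * (\<rho> * amb \<rho> (\<gamma> s) (covT \<rho> \<gamma> i s))"
    by (simp add: covD_alt amb_sym[of \<rho> _ "\<gamma> s"] algebra_simps)
  also have "\<dots> = amb \<rho> (covT \<rho> \<gamma> i s) (vector_derivative (covT \<rho> \<gamma> j) (at s)) + amb \<rho> (vector_derivative (covT \<rho> \<gamma> i) (at s)) (covT \<rho> \<gamma> j s)"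
    by (simp only: tan[OF s] mult_zero_right add_0_right)
  finally show ?thesis using d by simp
qed

end

definition gg :: "real \<Rightarrow> (real \<Rightarrow> real^4) \<Rightarrow> nat \<Rightarrow> nat \<Rightarrow> real \<Rightarrow> real" where
  "gg \<rho> \<gamma> i j x = amb \<rho> (covT \<rho> \<gamma> i x) (covT \<rho> \<gamma> j x)"

lemma gg_sym: "gg \<rho> \<gamma> i j x = gg \<rho> \<gamma> j i x"
  unfolding gg_def by (rule amb_sym)

context tri
begin

abbreviation "G \<equiv> gg \<rho> \<gamma>"

lemma metN: "s \<in> I \<Longrightarrow> i' = Suc i \<Longrightarrow> j' = Suc j \<Longrightarrow>
  (G i j has_vector_derivative (G i' j s + G i j' s)) (at s)"
  using met[of s i j] unfolding gg_def by simp

lemma dir1: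
  assumes th: "triharmonic_on \<rho> I \<gamma>" and kc: "\<forall>s\<in>I. \<kappa> s = k" and ne: "I \<noteq> {}"
  shows "\<exists>c. \<forall>s\<in>I. \<tau> s = c"
proof -
  obtain s0 where s0: "s0 \<in> I" using ne by auto
  have kpos: "k > 0" using frs(3)[OF s0] kc s0 by auto
  have c1: "\<And>x. x \<in> I \<Longrightarrow> covT \<rho> \<gamma> 1 x = k *\<^sub>R N x" using frs kc by simp
  have S00: "\<forall>x\<in>I. G 0 0 x = 1" using frs by (simp add: gg_def)
  have S11: "\<forall>x\<in>I. G 1 1 x = k * k"
  proof
    fix x assume x: "x \<in> I"
    show "G 1 1 x = k * k" unfolding gg_def c1[OF x] using frs(4)[OF x] by simp
  qed
  have F01: "\<forall>x\<in>I. G 0 1 x = 0"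
  proof
    fix x assume x: "x \<in> I"
    have "G 1 0 x + G 0 1 x = 0" by (rule deriv_const_on[OF I_open x S00 metN[OF x]]) simp_all
    then show "G 0 1 x = 0" using gg_sym[of \<rho> \<gamma> 1 0 x] by simp
  qed
  have F12: "\<forall>x\<in>I. G 1 2 x = 0"
  proof
    fix x assume x: "x \<in> I"
    have "G 2 1 x + G 1 2 x = 0" by (rule deriv_const_on[OF I_open x S11 metN[OF x]]) simp_all
    then show "G 1 2 x = 0" using gg_sym[of \<rho> \<gamma> 2 1 x] by simp
  qed
  have F02: "\<forall>x\<in>I. G 0 2 x = - (k * k)"
  proof
    fix x assume x: "x \<in> I"
    have "G 1 1 x + G 0 2 x = 0" by (rule deriv_const_on[OF I_open x F01 metN[OF x]]) simp_all
    then show "G 0 2 x = - (k * k)" using S11 x by simp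
  qed
  have F03: "\<forall>x\<in>I. G 0 3 x = 0"
  proof
    fix x assume x: "x \<in> I"
    have "G 1 2 x + G 0 3 x = 0" by (rule deriv_const_on[OF I_open x F02 metN[OF x]]) simp_all
    then show "G 0 3 x = 0" using F12 x by simp
  qed
  have F13: "\<forall>x\<in>I. G 1 3 x = - G 2 2 x"
  proof
    fix x assume x: "x \<in> I"
    have "G 2 2 x + G 1 3 x = 0" by (rule deriv_const_on[OF I_open x F12 metN[OF x]]) simp_all
    then show "G 1 3 x = - G 2 2 x" by simp
  qed
  have F04: "\<forall>x\<in>I. G 0 4 x = G 2 2 x"
  proof
    fix x assume x: "x \<in> I"
    have "G 1 3 x + G 0 4 x = 0" by (rule deriv_const_on[OF I_open x F03 metN[OF x]]) simp_all
    then show "G 0 4 x = G 2 2 x" using F13 x by simp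
  qed
  have F14: "\<forall>x\<in>I. G 1 4 x = -3 * G 2 3 x"
  proof
    fix x assume x: "x \<in> I"
    have d2: "((\<lambda>x. - G 2 2 x) has_vector_derivative - (G 3 2 x + G 2 3 x)) (at x)"
      by (rule has_vector_derivative_minus[OF metN[OF x]]) simp_all
    have "G 2 3 x + G 1 4 x = - (G 3 2 x + G 2 3 x)"
      by (rule deriv_eq_on[OF I_open x F13 metN[OF x] d2]) simp_all
    then show "G 1 4 x = -3 * G 2 3 x" using gg_sym[of \<rho> \<gamma> 3 2 x] by simp
  qed
  have F05: "\<forall>x\<in>I. G 0 5 x = 5 * G 2 3 x"
  proof
    fix x assume x: "x \<in> I"
    have "G 1 4 x + G 0 5 x = G 3 2 x + G 2 3 x"
      by (rule deriv_eq_on[OF I_open x F04 metN[OF x] metN[OF x]]) simp_all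
    then show "G 0 5 x = 5 * G 2 3 x" using gg_sym[of \<rho> \<gamma> 3 2 x] F14 x by simp
  qed
  have F23: "\<forall>x\<in>I. G 2 3 x = 0"
  proof
    fix x assume x: "x \<in> I"
    have E: "covT \<rho> \<gamma> 5 x + curvR \<rho> (covT \<rho> \<gamma> 3 x) (covT \<rho> \<gamma> 0 x) (covT \<rho> \<gamma> 0 x)
        - curvR \<rho> (covT \<rho> \<gamma> 2 x) (covT \<rho> \<gamma> 1 x) (covT \<rho> \<gamma> 0 x) = 0"
      using th x unfolding triharmonic_on_def by blast
    have "amb \<rho> (covT \<rho> \<gamma> 5 x + curvR \<rho> (covT \<rho> \<gamma> 3 x) (covT \<rho> \<gamma> 0 x) (covT \<rho> \<gamma> 0 x)
        - curvR \<rho> (covT \<rho> \<gamma> 2 x) (covT \<rho> \<gamma> 1 x) (covT \<rho> \<gamma> 0 x)) (covT \<rho> \<gamma> 0 x) = G 0 5 x"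
      unfolding curvR_def gg_def by (simp add: algebra_simps) (rule amb_sym)
    then have "G 0 5 x = 0" unfolding E by simp
    then show "G 2 3 x = 0" using F05 x by simp
  qed
  have "\<exists>C. \<forall>x\<in>I. G 2 2 x = C"
  proof (rule has_field_derivative_zero_constant)
    show "convex I" using I_int by (simp add: is_interval_convex)
  next
    fix x assume x: "x \<in> I"
    have "(G 2 2 has_vector_derivative (G 3 2 x + G 2 3 x)) (at x)" by (rule metN[OF x]) simp_all
    then have "(G 2 2 has_real_derivative 0) (at x)"
      using F23 x gg_sym[of \<rho> \<gamma> 3 2 x] by (simp add: has_real_derivative_iff_has_vector_derivative)
    then show "(G 2 2 has_real_derivative 0) (at x within I)" by (rule has_field_derivative_at_within)
  qed
  then obtain C where C: "\<forall>x\<in>I. G 2 2 x = C" by blast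
  have c2: "covT \<rho> \<gamma> 2 x = k *\<^sub>R (- k *\<^sub>R T x + \<tau> x *\<^sub>R B x)" if x: "x \<in> I" for x
  proof -
    have "((\<lambda>y. k *\<^sub>R N y) has_vector_derivative k *\<^sub>R (- \<kappa> x *\<^sub>R T x + \<tau> x *\<^sub>R B x)) (at x)"
      using has_vector_derivative_scaleR[OF DERIV_const N_der[OF x], of k] by simp
    then have "(covT \<rho> \<gamma> 1 has_vector_derivative k *\<^sub>R (- \<kappa> x *\<^sub>R T x + \<tau> x *\<^sub>R B x)) (at x)"
      by (rule has_vector_derivative_transform_within_open[OF _ I_open x]) (simp only: c1)
    then have "covD \<rho> \<gamma> (covT \<rho> \<gamma> 1) x = k *\<^sub>R (- \<kappa> x *\<^sub>R T x + \<tau> x *\<^sub>R B x) + (\<rho> * amb \<rho> (T x) (covT \<rho> \<gamma> 1 x)) *\<^sub>R \<gamma> x"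
      by (rule covD_at)
    moreover have "covT \<rho> \<gamma> 2 x = covD \<rho> \<gamma> (covT \<rho> \<gamma> 1) x" by (simp add: numeral_2_eq_2)
    ultimately show ?thesis using c1[OF x] frs[OF x] kc x by simp
  qed
  have tsq: "\<forall>x\<in>I. \<tau> x * \<tau> x = C / (k * k) - k * k"
  proof
    fix x assume x: "x \<in> I"
    have "G 2 2 x = k * k * (k * k + \<tau> x * \<tau> x)"
      unfolding gg_def c2[OF x] using frs[OF x] by (simp add: algebra_simps)
    then show "\<tau> x * \<tau> x = C / (k * k) - k * k" using C x kpos by (simp add: field_simps)
  qed
  have teq: "\<forall>x\<in>I. \<tau> x = amb \<rho> (covT \<rho> \<gamma> 2 x) (B x) / k"
  proof
    fix x assume x: "x \<in> I"
    show "\<tau> x = amb \<rho> (covT \<rho> \<gamma> 2 x) (B x) / k" unfolding c2[OF x] using frs[OF x] kpos by simp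
  qed
  have cont2: "continuous_on I (\<lambda>x. amb \<rho> (covT \<rho> \<gamma> 2 x) (B x) / k)"
  proof (intro continuous_at_imp_continuous_on ballI)
    fix x assume x: "x \<in> I"
    have a: "continuous (at x) (covT \<rho> \<gamma> 2)" by (rule has_vector_derivative_continuous[OF covT_has[OF x]])
    have b: "continuous (at x) B" by (rule differentiable_imp_continuous_within[OF frs(2)[OF x]])
    have "continuous (at x) (\<lambda>x. amb \<rho> (covT \<rho> \<gamma> 2 x) (B x))"
      by (rule bounded_bilinear.continuous[OF bb_amb a b])
    then show "isCont (\<lambda>x. amb \<rho> (covT \<rho> \<gamma> 2 x) (B x) / k) x"
      by (intro continuous_intros) (use kpos in auto)
  qed
  have ct: "continuous_on I \<tau>"
    using cont2 continuous_on_cong[of I I \<tau>] teq by auto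
  have conn: "connected (\<tau> ` I)"
    by (rule connected_continuous_image[OF ct is_interval_connected[OF I_int]])
  show ?thesis
  proof (rule exI[of _ "\<tau> s0"], rule ballI, rule ccontr)
    fix s assume s: "s \<in> I" and ne: "\<tau> s \<noteq> \<tau> s0"
    have "\<tau> s * \<tau> s = \<tau> s0 * \<tau> s0" using tsq s s0 by simp
    then have "(\<tau> s - \<tau> s0) * (\<tau> s + \<tau> s0) = 0" by (simp add: algebra_simps)
    then have m: "\<tau> s = - \<tau> s0" using ne by simp
    have nz: "\<tau> s0 \<noteq> 0" using m ne by auto
    have i1: "\<tau> s \<in> \<tau> ` I" "\<tau> s0 \<in> \<tau> ` I" using s s0 by auto
    have "0 \<in> \<tau> ` I"
    proof (cases "\<tau> s0 > 0")
      case True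
      show ?thesis by (rule connectedD_interval[OF conn i1(1) i1(2)]) (use m True in auto)
    next
      case False
      show ?thesis by (rule connectedD_interval[OF conn i1(2) i1(1)]) (use m False in auto)
    qed
    then obtain z where z: "z \<in> I" "\<tau> z = 0" by auto
    have "\<tau> s0 * \<tau> s0 = \<tau> z * \<tau> z" using tsq[rule_format, OF z(1)] tsq[rule_format, OF s0] by simp
    then have "\<tau> s0 * \<tau> s0 = 0" using z(2) by simp
    then show False using nz by simp
  qed
qed

end

theorem proposition4p3:
  fixes \<rho> :: real and I :: "real set" and \<gamma> :: "real \<Rightarrow> real^4"
    and \<kappa> \<tau> :: "real \<Rightarrow> real" and N B :: "real \<Rightarrow> real^4"
  assumes "open I" and "is_interval I" and "I \<noteq> {}"
    and "unit_speed_curve_in \<rho> I \<gamma>"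
    and "frenet_on \<rho> I \<gamma> \<kappa> \<tau> N B"
    and "proper_triharmonic_on \<rho> I \<gamma>"
  shows "(\<exists>c. \<forall>s\<in>I. \<kappa> s = c) \<longleftrightarrow> (\<exists>c. \<forall>s\<in>I. \<tau> s = c)"
proof -
  interpret tri \<rho> I \<gamma> \<kappa> \<tau> N B
    using assms(1,2,4,5) by unfold_locales
  have th: "triharmonic_on \<rho> I \<gamma>" using assms(6) unfolding proper_triharmonic_on_def by blast
  show ?thesis
  proof
    assume "\<exists>c. \<forall>s\<in>I. \<kappa> s = c"
    then obtain k where "\<forall>s\<in>I. \<kappa> s = k" by blast
    then show "\<exists>c. \<forall>s\<in>I. \<tau> s = c" using dir1[OF th _ assms(3)] by blast
  next
    assume "\<exists>c. \<forall>s\<in>I. \<tau> s = c"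
    then obtain c where "\<forall>s\<in>I. \<tau> s = c" by blast
    then show "\<exists>c. \<forall>s\<in>I. \<kappa> s = c" using dir2[OF th] by blast
  qed
qed

end
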